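(* Let $D^p$ be a PDB instance with $D^p\models\mathcal{IC}$, and assume $HG(D^p,\mathcal{IC})$ is the chain $\mathcal{C}=e_1,\dots,e_n$ with $n>1$. Let $\tilde\beta_1\subseteq\beta_1$ and $\tilde\beta_n\subseteq\beta_n$, where $\beta_1,\beta_n$ are the ears of $e_1$ and $e_n$. Then $$p^{\min}_{\mathcal{C}}(\tilde\beta_1\cup\tilde\beta_n)=\max\Big\{0,\ p^{\min}_\emptyset(\tilde\beta_1)+p^{\min}_\emptyset(\tilde\beta_n)-\big[1-p^{\min}_{sub(\mathcal{C})}(\alpha_1\cup(\beta_1\setminus\tilde\beta_1)\cup\alpha_{n-1}\cup(\beta_n\setminus\tilde\beta_n))\big]\Big\},$$ where $p^{\min}_{sub(\mathcal{C})}(\alpha_1\cup(\beta_1\setminus\tilde\beta_1)\cup\alpha_{n-1}\cup(\beta_n\setminus\tilde\beta_n))=\max\{0,\ p^{\min}_{sub(\mathcal{C})}(\alpha_1\cup\alpha_{n-1})+p^{\min}_\emptyset((\beta_1\setminus\tilde\beta_1)\cup(\beta_n\setminus\tilde\beta_n))-1\}$, and for any set of tuples $\gamma$, $p^{\min}_\emptyset(\gamma)=\max\{0,\sum_{t\in\gamma}p(t)-|\gamma|+1\}$.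
   Context: A PDB instance $D^p$ is a finite set of tuples, each with a probability $p(t)\in[0,1]$; possible worlds are subsets of its tuples; an interpretation is a probability distribution on possible worlds such that the total probability of worlds containing $t$ is $p(t)$. For a set $\mathcal{IC}$ of denial constraints, a model is an interpretation giving probability $0$ to worlds violating $\mathcal{IC}$; $D^p\models\mathcal{IC}$ iff a model exists. The conflict hypergraph $HG(D^p,\mathcal{IC})$ has the tuples as nodes and, as hyperedges, the minimal sets of tuples $T$ such that every world containing $T$ violates $\mathcal{IC}$. For a set $H$ of hyperedges (sets of tuples) and a set of tuples $X$, $p^{\min}_H(X)$ is the minimum, over all interpretations of $D^p$ that assign probability $0$ to every world containing all nodes of some hyperedge of $H$, of the total probability of the worlds containing all tuples of $X$. A chain is a hypergraph whose hyperedges form a sequence $e_1,\dots,e_n$ in which two hyperedges intersect iff they are consecutive. For a chain, $\alpha_i=e_i\cap e_{i+1}$ ($i\in[1..n-1]$), $\beta_i$ is the set of ears of $e_i$ (nodes belonging to no other hyperedge), and $sub(\mathcal{C})$ is the set of hyperedges $e_2,\dots,e_{n-1}$. *)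

theory Defs
  imports Complex_Main
begin

definition pdb :: "'a set \<Rightarrow> ('a \<Rightarrow> real) \<Rightarrow> bool" where
  "pdb T p \<longleftrightarrow> finite T \<and> (\<forall>t\<in>T. 0 \<le> p t \<and> p t \<le> 1)"

definition interp :: "'a set \<Rightarrow> ('a \<Rightarrow> real) \<Rightarrow> ('a set \<Rightarrow> real) \<Rightarrow> bool" where
  "interp T p Pr \<longleftrightarrow> (\<forall>w. 0 \<le> Pr w) \<and> (\<forall>w. \<not> w \<subseteq> T \<longrightarrow> Pr w = 0)
     \<and> (\<Sum>w\<in>Pow T. Pr w) = 1
     \<and> (\<forall>t\<in>T. (\<Sum>w\<in>{w\<in>Pow T. t \<in> w}. Pr w) = p t)"

text \<open>A set of denial constraints is represented by its violation predicate on worlds;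
  denial constraints are exactly the monotone ones (a superset of a violating world violates).\<close>
definition denial :: "'a set \<Rightarrow> ('a set \<Rightarrow> bool) \<Rightarrow> bool" where
  "denial T viol \<longleftrightarrow> (\<forall>w w'. w \<subseteq> w' \<longrightarrow> w' \<subseteq> T \<longrightarrow> viol w \<longrightarrow> viol w')"

definition model :: "'a set \<Rightarrow> ('a \<Rightarrow> real) \<Rightarrow> ('a set \<Rightarrow> bool) \<Rightarrow> ('a set \<Rightarrow> real) \<Rightarrow> bool" where
  "model T p viol Pr \<longleftrightarrow> interp T p Pr \<and> (\<forall>w. w \<subseteq> T \<longrightarrow> viol w \<longrightarrow> Pr w = 0)"

definition satisfies :: "'a set \<Rightarrow> ('a \<Rightarrow> real) \<Rightarrow> ('a set \<Rightarrow> bool) \<Rightarrow> bool" where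
  "satisfies T p viol \<longleftrightarrow> (\<exists>Pr. model T p viol Pr)"

definition conflict_hg :: "'a set \<Rightarrow> ('a set \<Rightarrow> bool) \<Rightarrow> 'a set set" where
  "conflict_hg T viol = {X. X \<subseteq> T \<and> (\<forall>w. X \<subseteq> w \<and> w \<subseteq> T \<longrightarrow> viol w)
      \<and> (\<forall>Y. Y \<subset> X \<longrightarrow> \<not> (\<forall>w. Y \<subseteq> w \<and> w \<subseteq> T \<longrightarrow> viol w))}"

definition pmin :: "'a set \<Rightarrow> ('a \<Rightarrow> real) \<Rightarrow> 'a set set \<Rightarrow> 'a set \<Rightarrow> real" where
  "pmin T p H X = Inf {(\<Sum>w\<in>{w\<in>Pow T. X \<subseteq> w}. Pr w) | Pr.
       interp T p Pr \<and> (\<forall>w\<in>Pow T. (\<exists>e\<in>H. e \<subseteq> w) \<longrightarrow> Pr w = 0)}"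

definition is_chain :: "'a set set \<Rightarrow> (nat \<Rightarrow> 'a set) \<Rightarrow> nat \<Rightarrow> bool" where
  "is_chain H e n \<longleftrightarrow> H = e ` {1..n} \<and> inj_on e {1..n} \<and>
     (\<forall>i\<in>{1..n}. \<forall>j\<in>{1..n}. i \<noteq> j \<longrightarrow> (e i \<inter> e j \<noteq> {} \<longleftrightarrow> (i = Suc j \<or> j = Suc i)))"

definition alpha :: "(nat \<Rightarrow> 'a set) \<Rightarrow> nat \<Rightarrow> 'a set" where
  "alpha e i = e i \<inter> e (Suc i)"

definition ears :: "(nat \<Rightarrow> 'a set) \<Rightarrow> nat \<Rightarrow> nat \<Rightarrow> 'a set" where
  "ears e n i = e i - \<Union> (e ` ({1..n} - {i}))"

definition sub :: "(nat \<Rightarrow> 'a set) \<Rightarrow> nat \<Rightarrow> 'a set set" where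
  "sub e n = e ` {2..n - 1}"

end

theory Submission
  imports Defs
begin


definition pd :: "'a set \<Rightarrow> ('a set \<Rightarrow> real) \<Rightarrow> bool" where
  "pd S Q \<longleftrightarrow> (\<forall>w. 0 \<le> Q w) \<and> (\<forall>w. \<not> w \<subseteq> S \<longrightarrow> Q w = 0) \<and> sum Q (Pow S) = 1"

definition prb :: "'a set \<Rightarrow> ('a set \<Rightarrow> real) \<Rightarrow> ('a set \<Rightarrow> bool) \<Rightarrow> real" where
  "prb S Q P = (\<Sum>w\<in>{w\<in>Pow S. P w}. Q w)"

lemma prb_if: "finite S \<Longrightarrow> prb S Q P = (\<Sum>w\<in>Pow S. if P w then Q w else 0)"
  unfolding prb_def by (subst sum.inter_filter[symmetric]) auto

lemma interp_pd: "interp S p Q \<longleftrightarrow> pd S Q \<and> (\<forall>t\<in>S. prb S Q (\<lambda>w. t \<in> w) = p t)"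
  unfolding interp_def pd_def prb_def by auto

lemma prb_nonneg: "pd S Q \<Longrightarrow> 0 \<le> prb S Q P"
  unfolding prb_def pd_def by (auto intro: sum_nonneg)

lemma prb_split: "finite S \<Longrightarrow> prb S Q P = prb S Q (\<lambda>w. P w \<and> R w) + prb S Q (\<lambda>w. P w \<and> \<not> R w)"
  by (simp add: prb_if sum.distrib[symmetric]) (rule sum.cong, auto)

lemma prb_True: "finite S \<Longrightarrow> pd S Q \<Longrightarrow> prb S Q (\<lambda>w. True) = 1"
proof -
  have "{w\<in>Pow S. True} = Pow S" by auto
  thus "finite S \<Longrightarrow> pd S Q \<Longrightarrow> prb S Q (\<lambda>w. True) = 1" unfolding prb_def pd_def by simp
qed

lemma prb_cong: "(\<And>w. w \<subseteq> S \<Longrightarrow> P w = R w) \<Longrightarrow> prb S Q P = prb S Q R"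
  unfolding prb_def by (rule sum.cong) auto

lemma prb_compl: "finite S \<Longrightarrow> pd S Q \<Longrightarrow> prb S Q (\<lambda>w. \<not> P w) = 1 - prb S Q P"
  using prb_split[of S Q "\<lambda>w. True" P] prb_True[of S Q] by simp

lemma prb_mono: "finite S \<Longrightarrow> pd S Q \<Longrightarrow> (\<And>w. w \<subseteq> S \<Longrightarrow> P w \<Longrightarrow> R w) \<Longrightarrow> prb S Q P \<le> prb S Q R"
  by (simp add: prb_if pd_def) (rule sum_mono, auto)

lemma prb_le1: "finite S \<Longrightarrow> pd S Q \<Longrightarrow> prb S Q P \<le> 1"
  using prb_mono[of S Q P "\<lambda>w. True"] prb_True[of S Q] by simp

lemma prb_zero: "(\<And>w. w \<subseteq> S \<Longrightarrow> P w \<Longrightarrow> Q w = 0) \<Longrightarrow> prb S Q P = 0"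
  unfolding prb_def by (rule sum.neutral) auto

lemma prb_and_ge: "finite S \<Longrightarrow> pd S Q \<Longrightarrow> prb S Q P + prb S Q R - 1 \<le> prb S Q (\<lambda>w. P w \<and> R w)"
proof -
  assume f: "finite S" and d: "pd S Q"
  have "prb S Q P = prb S Q (\<lambda>w. P w \<and> R w) + prb S Q (\<lambda>w. P w \<and> \<not> R w)" by (rule prb_split[OF f])
  moreover have "prb S Q (\<lambda>w. P w \<and> \<not> R w) \<le> prb S Q (\<lambda>w. \<not> R w)" by (rule prb_mono[OF f d]) auto
  moreover have "prb S Q (\<lambda>w. \<not> R w) = 1 - prb S Q R" by (rule prb_compl[OF f d])
  ultimately show ?thesis by linarith
qed

lemma prb_or_le: "finite S \<Longrightarrow> pd S Q \<Longrightarrow> prb S Q (\<lambda>w. P w \<or> R w) \<le> prb S Q P + prb S Q R"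
proof -
  assume f: "finite S" and d: "pd S Q"
  have "prb S Q (\<lambda>w. P w \<or> R w) = prb S Q (\<lambda>w. (P w \<or> R w) \<and> P w) + prb S Q (\<lambda>w. (P w \<or> R w) \<and> \<not> P w)"
    by (rule prb_split[OF f])
  moreover have "prb S Q (\<lambda>w. (P w \<or> R w) \<and> P w) = prb S Q P" by (rule prb_cong) auto
  moreover have "prb S Q (\<lambda>w. (P w \<or> R w) \<and> \<not> P w) \<le> prb S Q R" by (rule prb_mono[OF f d]) auto
  ultimately show ?thesis by linarith
qed


lemma sum_Pow_Un:
  assumes f1: "finite S1" and f2: "finite S2" and dj: "S1 \<inter> S2 = {}"
  shows "(\<Sum>w\<in>Pow (S1 \<union> S2). f w) = (\<Sum>w1\<in>Pow S1. \<Sum>w2\<in>Pow S2. f (w1 \<union> w2))"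
proof -
  have b: "bij_betw (\<lambda>(a,b). a \<union> b) (Pow S1 \<times> Pow S2) (Pow (S1 \<union> S2))"
    by (rule bij_betw_byWitness[where f'="\<lambda>w. (w \<inter> S1, w \<inter> S2)"]) (use dj in auto)
  have "(\<Sum>w1\<in>Pow S1. \<Sum>w2\<in>Pow S2. f (w1 \<union> w2)) = (\<Sum>x\<in>Pow S1 \<times> Pow S2. f ((\<lambda>(a,b). a \<union> b) x))"
    by (simp add: sum.cartesian_product split_def)
  also have "\<dots> = (\<Sum>w\<in>Pow (S1 \<union> S2). f w)" by (rule sum.reindex_bij_betw[OF b])
  finally show ?thesis by simp
qed

definition mu :: "'a set \<Rightarrow> ('a set \<Rightarrow> real) \<Rightarrow> ('a set \<Rightarrow> nat) \<Rightarrow> nat \<Rightarrow> real" where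
  "mu S Q c k = prb S Q (\<lambda>w. c w = k)"

definition cpl where
  "cpl S1 S2 Q1 Q2 c1 c2 J w = (if w \<subseteq> S1 \<union> S2 then
      Q1 (w \<inter> S1) * Q2 (w \<inter> S2) * J (c1 (w \<inter> S1)) (c2 (w \<inter> S2))
        / (mu S1 Q1 c1 (c1 (w \<inter> S1)) * mu S2 Q2 c2 (c2 (w \<inter> S2))) else 0)"

lemma cpl_swap: "cpl S1 S2 Q1 Q2 c1 c2 J w = cpl S2 S1 Q2 Q1 c2 c1 (\<lambda>a b. J b a) w"
  unfolding cpl_def by (simp add: Un_commute mult_ac)

lemma cpl_Un:
  assumes "w1 \<subseteq> S1" "w2 \<subseteq> S2" "S1 \<inter> S2 = {}"
  shows "cpl S1 S2 Q1 Q2 c1 c2 J (w1 \<union> w2) = Q1 w1 * Q2 w2 * J (c1 w1) (c2 w2)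
        / (mu S1 Q1 c1 (c1 w1) * mu S2 Q2 c2 (c2 w2))"
proof -
  have "(w1 \<union> w2) \<inter> S1 = w1" "(w1 \<union> w2) \<inter> S2 = w2" using assms by auto
  thus ?thesis unfolding cpl_def using assms by auto
qed

locale coupling =
  fixes S1 S2 :: "'a set" and Q1 Q2 :: "'a set \<Rightarrow> real" and c1 c2 :: "'a set \<Rightarrow> nat"
    and K1 K2 :: "nat set" and J :: "nat \<Rightarrow> nat \<Rightarrow> real"
  assumes f1: "finite S1" and f2: "finite S2" and dj: "S1 \<inter> S2 = {}"
    and d1: "pd S1 Q1" and d2: "pd S2 Q2"
    and fK1: "finite K1" and fK2: "finite K2"
    and cK1: "\<And>w. c1 w \<in> K1" and cK2: "\<And>w. c2 w \<in> K2"
    and Jnn: "\<And>a b. 0 \<le> J a b"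
    and row: "\<And>a. a \<in> K1 \<Longrightarrow> (\<Sum>b\<in>K2. J a b) = mu S1 Q1 c1 a"
    and col: "\<And>b. b \<in> K2 \<Longrightarrow> (\<Sum>a\<in>K1. J a b) = mu S2 Q2 c2 b"
begin

abbreviation "P \<equiv> cpl S1 S2 Q1 Q2 c1 c2 J"

lemma mu_eq: "mu S Q c k = (\<Sum>w\<in>{w\<in>Pow S. c w = k}. Q w)"
  unfolding mu_def prb_def by simp

lemma Q1_le: "Q1 w \<le> mu S1 Q1 c1 (c1 w)" if "w \<subseteq> S1"
  unfolding mu_eq using d1 that f1 unfolding pd_def by (intro member_le_sum) auto

lemma Q2_le: "Q2 w \<le> mu S2 Q2 c2 (c2 w)" if "w \<subseteq> S2"
  unfolding mu_eq using d2 that f2 unfolding pd_def by (intro member_le_sum) auto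

lemma J_le_col: "a \<in> K1 \<Longrightarrow> b \<in> K2 \<Longrightarrow> J a b \<le> mu S2 Q2 c2 b"
  using col[of b] member_le_sum[of a K1 "\<lambda>a. J a b"] Jnn fK1 by auto

lemma J_le_row: "a \<in> K1 \<Longrightarrow> b \<in> K2 \<Longrightarrow> J a b \<le> mu S1 Q1 c1 a"
  using row[of a] member_le_sum[of b K2 "\<lambda>b. J a b"] Jnn fK2 by auto

lemma rowsum: assumes w1: "w1 \<subseteq> S1"
  shows "(\<Sum>w2\<in>Pow S2. P (w1 \<union> w2)) = Q1 w1"
proof -
  let ?k1 = "c1 w1"
  let ?m2 = "mu S2 Q2 c2"
  have "(\<Sum>w2\<in>Pow S2. P (w1 \<union> w2)) =
      (\<Sum>w2\<in>Pow S2. Q1 w1 / mu S1 Q1 c1 ?k1 * (Q2 w2 * J ?k1 (c2 w2) / ?m2 (c2 w2)))"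
    using w1 dj by (intro sum.cong) (auto simp: cpl_Un)
  also have "\<dots> = Q1 w1 / mu S1 Q1 c1 ?k1 * (\<Sum>w2\<in>Pow S2. Q2 w2 * J ?k1 (c2 w2) / ?m2 (c2 w2))"
    by (simp add: sum_distrib_left)
  also have "(\<Sum>w2\<in>Pow S2. Q2 w2 * J ?k1 (c2 w2) / ?m2 (c2 w2)) =
      (\<Sum>k2\<in>K2. \<Sum>w2\<in>{w2\<in>Pow S2. c2 w2 = k2}. Q2 w2 * J ?k1 (c2 w2) / ?m2 (c2 w2))"
    using f2 fK2 cK2 by (intro sum.group[symmetric]) auto
  also have "\<dots> = (\<Sum>k2\<in>K2. J ?k1 k2)"
  proof (rule sum.cong)
    fix k2 assume k2: "k2 \<in> K2"
    have "(\<Sum>w2\<in>{w2\<in>Pow S2. c2 w2 = k2}. Q2 w2 * J ?k1 (c2 w2) / ?m2 (c2 w2))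
        = (\<Sum>w2\<in>{w2\<in>Pow S2. c2 w2 = k2}. Q2 w2 * (J ?k1 k2 / ?m2 k2))"
      by (rule sum.cong) auto
    also have "\<dots> = (\<Sum>w2\<in>{w2\<in>Pow S2. c2 w2 = k2}. Q2 w2) * (J ?k1 k2 / ?m2 k2)"
      by (rule sum_distrib_right[symmetric])
    also have "\<dots> = ?m2 k2 * (J ?k1 k2 / ?m2 k2)" by (simp add: mu_eq)
    also have "\<dots> = J ?k1 k2"
    proof (cases "?m2 k2 = 0")
      case True
      with J_le_col[OF cK1 k2] Jnn show ?thesis by (metis antisym mult_zero_left)
    qed simp
    finally show "(\<Sum>w2\<in>{w2\<in>Pow S2. c2 w2 = k2}. Q2 w2 * J ?k1 (c2 w2) / ?m2 (c2 w2)) = J ?k1 k2" .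
  qed simp
  also have "\<dots> = mu S1 Q1 c1 ?k1" by (rule row[OF cK1])
  finally have e: "(\<Sum>w2\<in>Pow S2. P (w1 \<union> w2)) = Q1 w1 / mu S1 Q1 c1 ?k1 * mu S1 Q1 c1 ?k1" .
  show ?thesis
  proof (cases "mu S1 Q1 c1 ?k1 = 0")
    case True
    with Q1_le[OF w1] d1 have "Q1 w1 = 0" unfolding pd_def by (metis antisym)
    with e True show ?thesis by simp
  next
    case False with e show ?thesis by simp
  qed
qed

lemma marg1: "prb (S1 \<union> S2) P (\<lambda>w. R (w \<inter> S1)) = prb S1 Q1 R"
proof -
  have "prb (S1 \<union> S2) P (\<lambda>w. R (w \<inter> S1)) = (\<Sum>w\<in>Pow (S1 \<union> S2). if R (w \<inter> S1) then P w else 0)"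
    using f1 f2 by (simp add: prb_if)
  also have "\<dots> = (\<Sum>w1\<in>Pow S1. \<Sum>w2\<in>Pow S2. if R ((w1 \<union> w2) \<inter> S1) then P (w1 \<union> w2) else 0)"
    by (rule sum_Pow_Un[OF f1 f2 dj])
  also have "\<dots> = (\<Sum>w1\<in>Pow S1. if R w1 then (\<Sum>w2\<in>Pow S2. P (w1 \<union> w2)) else 0)"
  proof (rule sum.cong)
    fix w1 assume "w1 \<in> Pow S1"
    hence "\<And>w2. w2 \<in> Pow S2 \<Longrightarrow> (w1 \<union> w2) \<inter> S1 = w1" using dj by auto
    thus "(\<Sum>w2\<in>Pow S2. if R ((w1 \<union> w2) \<inter> S1) then P (w1 \<union> w2) else 0) =
        (if R w1 then (\<Sum>w2\<in>Pow S2. P (w1 \<union> w2)) else 0)" by simp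
  qed simp
  also have "\<dots> = (\<Sum>w1\<in>Pow S1. if R w1 then Q1 w1 else 0)"
    by (rule sum.cong) (auto simp: rowsum)
  also have "\<dots> = prb S1 Q1 R" using f1 by (simp add: prb_if)
  finally show ?thesis .
qed

lemma classprob:
  assumes k1: "k1 \<in> K1" and k2: "k2 \<in> K2"
  shows "prb (S1 \<union> S2) P (\<lambda>w. c1 (w \<inter> S1) = k1 \<and> c2 (w \<inter> S2) = k2) = J k1 k2"
proof -
  let ?m1 = "mu S1 Q1 c1 k1" and ?m2 = "mu S2 Q2 c2 k2"
  have "prb (S1 \<union> S2) P (\<lambda>w. c1 (w \<inter> S1) = k1 \<and> c2 (w \<inter> S2) = k2)
     = (\<Sum>w\<in>Pow (S1 \<union> S2). if c1 (w \<inter> S1) = k1 \<and> c2 (w \<inter> S2) = k2 then P w else 0)"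
    using f1 f2 by (simp add: prb_if)
  also have "\<dots> = (\<Sum>w1\<in>Pow S1. \<Sum>w2\<in>Pow S2. if c1 ((w1 \<union> w2) \<inter> S1) = k1 \<and> c2 ((w1 \<union> w2) \<inter> S2) = k2 then P (w1 \<union> w2) else 0)"
    by (rule sum_Pow_Un[OF f1 f2 dj])
  also have "\<dots> = (\<Sum>w1\<in>Pow S1. \<Sum>w2\<in>Pow S2. (if c1 w1 = k1 then Q1 w1 else 0) * ((if c2 w2 = k2 then Q2 w2 else 0) * (J k1 k2 / (?m1 * ?m2))))"
  proof (intro sum.cong refl)
    fix w1 w2 assume "w1 \<in> Pow S1" "w2 \<in> Pow S2"
    moreover hence "(w1 \<union> w2) \<inter> S1 = w1" "(w1 \<union> w2) \<inter> S2 = w2" using dj by auto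
    ultimately show "(if c1 ((w1 \<union> w2) \<inter> S1) = k1 \<and> c2 ((w1 \<union> w2) \<inter> S2) = k2 then P (w1 \<union> w2) else 0) =
      (if c1 w1 = k1 then Q1 w1 else 0) * ((if c2 w2 = k2 then Q2 w2 else 0) * (J k1 k2 / (?m1 * ?m2)))"
      using dj by (auto simp: cpl_Un)
  qed
  also have "\<dots> = (\<Sum>w1\<in>Pow S1. if c1 w1 = k1 then Q1 w1 else 0) * (\<Sum>w2\<in>Pow S2. (if c2 w2 = k2 then Q2 w2 else 0) * (J k1 k2 / (?m1 * ?m2)))"
    by (simp only: sum_product)
  also have "\<dots> = (\<Sum>w1\<in>Pow S1. if c1 w1 = k1 then Q1 w1 else 0) * ((\<Sum>w2\<in>Pow S2. if c2 w2 = k2 then Q2 w2 else 0) * (J k1 k2 / (?m1 * ?m2)))"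
    by (simp only: sum_distrib_right)
  also have "\<dots> = ?m1 * (?m2 * (J k1 k2 / (?m1 * ?m2)))"
    using f1 f2 by (simp add: mu_def prb_if)
  also have "\<dots> = J k1 k2"
  proof (cases "?m1 = 0 \<or> ?m2 = 0")
    case True
    hence "J k1 k2 = 0" using J_le_row[OF k1 k2] J_le_col[OF k1 k2] Jnn[of k1 k2] by auto
    thus ?thesis by simp
  qed auto
  finally show ?thesis .
qed

lemma cpl_nonneg: "0 \<le> P w"
proof -
  have "0 \<le> mu S1 Q1 c1 k" for k using prb_nonneg[OF d1] unfolding mu_def .
  moreover have "0 \<le> mu S2 Q2 c2 k" for k using prb_nonneg[OF d2] unfolding mu_def .
  moreover have "0 \<le> Q1 x" "0 \<le> Q2 x" for x using d1 d2 unfolding pd_def by auto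
  ultimately show ?thesis unfolding cpl_def using Jnn by (auto intro!: divide_nonneg_nonneg mult_nonneg_nonneg)
qed

lemma cpl_pd: "pd (S1 \<union> S2) P"
proof -
  have "prb (S1 \<union> S2) P (\<lambda>w. (\<lambda>_. True) (w \<inter> S1)) = prb S1 Q1 (\<lambda>_. True)" by (rule marg1)
  hence "prb (S1 \<union> S2) P (\<lambda>w. True) = 1" using prb_True[OF f1 d1] by simp
  hence "sum P (Pow (S1 \<union> S2)) = 1" unfolding prb_def by (simp add: Pow_def)
  thus ?thesis unfolding pd_def using cpl_nonneg by (auto simp: cpl_def)
qed

lemma cpl_zero1: "Q1 (w \<inter> S1) = 0 \<Longrightarrow> P w = 0"
  unfolding cpl_def by simp

lemma cpl_zero2: "Q2 (w \<inter> S2) = 0 \<Longrightarrow> P w = 0"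
  unfolding cpl_def by simp

lemma cpl_zeroJ: "J (c1 (w \<inter> S1)) (c2 (w \<inter> S2)) = 0 \<Longrightarrow> P w = 0"
  unfolding cpl_def by simp

end

lemma coupling_swap: "coupling S1 S2 Q1 Q2 c1 c2 K1 K2 J \<Longrightarrow> coupling S2 S1 Q2 Q1 c2 c1 K2 K1 (\<lambda>a b. J b a)"
  unfolding coupling_def by auto

lemma (in coupling) marg2: "prb (S1 \<union> S2) P (\<lambda>w. R (w \<inter> S2)) = prb S2 Q2 R"
proof -
  interpret s: coupling S2 S1 Q2 Q1 c2 c1 K2 K1 "\<lambda>a b. J b a"
    by (rule coupling_swap) (rule coupling_axioms)
  have "P = cpl S2 S1 Q2 Q1 c2 c1 (\<lambda>a b. J b a)" by (rule ext) (rule cpl_swap)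
  thus ?thesis using s.marg1[of R] by (simp add: Un_commute)
qed


definition fill :: "real \<Rightarrow> real \<Rightarrow> real \<Rightarrow> nat \<Rightarrow> real" where
  "fill e m0 m1 k = (if k = 0 then min e m0 else if k = 1 then min (e - min e m0) m1
     else e - min e m0 - min (e - min e m0) m1)"

lemma fill_props:
  assumes "0 \<le> e" "e \<le> 1" "0 \<le> m0" "0 \<le> m1" "0 \<le> m2" "m0 + m1 + m2 = 1"
  shows "0 \<le> fill e m0 m1 0" "fill e m0 m1 0 \<le> m0"
    "0 \<le> fill e m0 m1 1" "fill e m0 m1 1 \<le> m1"
    "0 \<le> fill e m0 m1 2" "fill e m0 m1 2 \<le> m2"
    "fill e m0 m1 0 + fill e m0 m1 1 + fill e m0 m1 2 = e"
  using assms unfolding fill_def min_def by auto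

lemma fill2_zero: "0 \<le> e \<Longrightarrow> 0 \<le> m0 \<Longrightarrow> 0 \<le> m1 \<Longrightarrow> e \<le> m0 + m1 \<Longrightarrow> fill e m0 m1 2 = 0"
  unfolding fill_def min_def by auto

lemma fill1_le: "0 \<le> m1 \<Longrightarrow> fill e m0 m1 1 \<le> max 0 (e - m0)"
  unfolding fill_def min_def by auto

lemma fill12: "0 \<le> e \<Longrightarrow> 0 \<le> m0 \<Longrightarrow> 0 \<le> m1 \<Longrightarrow> fill e m0 m1 1 + fill e m0 m1 2 = max 0 (e - m0)"
  unfolding fill_def min_def by auto

lemma fill2_eq: "0 \<le> e \<Longrightarrow> 0 \<le> m0 \<Longrightarrow> 0 \<le> m1 \<Longrightarrow> fill e m0 m1 2 = max 0 (e - m0 - m1)"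
  unfolding fill_def min_def by auto

lemma prb_three:
  assumes f: "finite S" and d: "pd S Q" and c: "\<And>w. (c::'a set \<Rightarrow> nat) w < 3"
  shows "prb S Q (\<lambda>w. c w = 0) + prb S Q (\<lambda>w. c w = 1) + prb S Q (\<lambda>w. c w = 2) = 1"
proof -
  have "1 = prb S Q (\<lambda>w. True)" using prb_True[OF f d] by simp
  also have "\<dots> = prb S Q (\<lambda>w. True \<and> c w = 0) + prb S Q (\<lambda>w. True \<and> c w \<noteq> 0)" by (rule prb_split[OF f])
  also have "prb S Q (\<lambda>w. True \<and> c w \<noteq> 0) = prb S Q (\<lambda>w. c w \<noteq> 0 \<and> c w = 1) + prb S Q (\<lambda>w. c w \<noteq> 0 \<and> c w \<noteq> 1)"
    using prb_split[OF f] by simp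
  also have "prb S Q (\<lambda>w. c w \<noteq> 0 \<and> c w = 1) = prb S Q (\<lambda>w. c w = 1)" by (rule prb_cong) auto
  also have "prb S Q (\<lambda>w. c w \<noteq> 0 \<and> c w \<noteq> 1) = prb S Q (\<lambda>w. c w = 2)" 
  proof (rule prb_cong)
    fix w have "c w < 3" by (rule c)
    thus "(c w \<noteq> 0 \<and> c w \<noteq> 1) = (c w = 2)" by auto
  qed
  finally show ?thesis by simp
qed

lemma G3:
  fixes S1 S2 :: "'a set" and c1 :: "'a set \<Rightarrow> nat" and E :: "'a set \<Rightarrow> bool"
  assumes f1: "finite S1" and f2: "finite S2" and dj: "S1 \<inter> S2 = {}"
    and d1: "pd S1 Q1" and d2: "pd S2 Q2" and c3: "\<And>w. c1 w < 3"
  obtains Pr where "pd (S1 \<union> S2) Pr"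
     "\<forall>R. prb (S1 \<union> S2) Pr (\<lambda>w. R (w \<inter> S1)) = prb S1 Q1 R"
     "\<forall>R. prb (S1 \<union> S2) Pr (\<lambda>w. R (w \<inter> S2)) = prb S2 Q2 R"
     "\<forall>k<3. prb (S1 \<union> S2) Pr (\<lambda>w. c1 (w \<inter> S1) = k \<and> E (w \<inter> S2)) =
         fill (prb S2 Q2 E) (prb S1 Q1 (\<lambda>w. c1 w = 0)) (prb S1 Q1 (\<lambda>w. c1 w = 1)) k"
     "\<forall>w. Q1 (w \<inter> S1) = 0 \<longrightarrow> Pr w = 0"
     "\<forall>w. Q2 (w \<inter> S2) = 0 \<longrightarrow> Pr w = 0"
     "prb S2 Q2 E \<le> prb S1 Q1 (\<lambda>w. c1 w = 0) + prb S1 Q1 (\<lambda>w. c1 w = 1) \<longrightarrow>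
        (\<forall>w. c1 (w \<inter> S1) = 2 \<longrightarrow> E (w \<inter> S2) \<longrightarrow> Pr w = 0)"
proof -
  define m where "m = (\<lambda>k. prb S1 Q1 (\<lambda>w. c1 w = k))"
  define e where "e = prb S2 Q2 E"
  define c2 where "c2 = (\<lambda>w. if E w then 1 else (0::nat))"
  define F where "F = fill e (m 0) (m 1)"
  define J where "J = (\<lambda>k b. if k < 3 then (if b = (1::nat) then F k else m k - F k) else 0)"
  have m3: "m 0 + m 1 + m 2 = 1" unfolding m_def using prb_three[OF f1 d1 c3] .
  have mnn: "0 \<le> m k" for k unfolding m_def by (rule prb_nonneg[OF d1])
  have e01: "0 \<le> e" "e \<le> 1" unfolding e_def using prb_nonneg[OF d2] prb_le1[OF f2 d2] by auto
  note fp = fill_props[OF e01 mnn mnn mnn m3]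
  have mu2_1: "mu S2 Q2 c2 1 = e" unfolding mu_def e_def c2_def by (rule prb_cong) auto
  have mu2_0: "mu S2 Q2 c2 0 = 1 - e"
  proof -
    have "mu S2 Q2 c2 0 = prb S2 Q2 (\<lambda>w. \<not> E w)" unfolding mu_def c2_def by (rule prb_cong) auto
    thus ?thesis unfolding e_def using prb_compl[OF f2 d2] by simp
  qed
  have mu1: "mu S1 Q1 c1 k = m k" for k unfolding mu_def m_def ..
  have K3: "{..<3::nat} = {0,1,2}" by auto
  interpret cp: coupling S1 S2 Q1 Q2 c1 c2 "{..<3}" "{0,1}" J
  proof
    show "finite S1" "finite S2" "S1 \<inter> S2 = {}" "pd S1 Q1" "pd S2 Q2" by fact+
    show "finite {..<3::nat}" "finite {0,1::nat}" by auto
    show "c1 w \<in> {..<3}" for w using c3 by auto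
    show "c2 w \<in> {0,1}" for w unfolding c2_def by auto
    show "0 \<le> J a b" for a b unfolding J_def F_def using fp
      by (auto simp: less_Suc_eq numeral_3_eq_3 numeral_2_eq_2)
    show "(\<Sum>b\<in>{0,1}. J a b) = mu S1 Q1 c1 a" if "a \<in> {..<3}" for a
      using that unfolding J_def mu1 by simp
    show "(\<Sum>a\<in>{..<3}. J a b) = mu S2 Q2 c2 b" if "b \<in> {0,1}" for b
      using that fp m3 mu2_0 mu2_1 unfolding J_def K3 F_def by auto
  qed
  let ?P = "cpl S1 S2 Q1 Q2 c1 c2 J"
  have r1: "pd (S1 \<union> S2) ?P" by (rule cp.cpl_pd)
  have r2: "\<forall>R. prb (S1 \<union> S2) ?P (\<lambda>w. R (w \<inter> S1)) = prb S1 Q1 R" using cp.marg1 by blast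
  have r3: "\<forall>R. prb (S1 \<union> S2) ?P (\<lambda>w. R (w \<inter> S2)) = prb S2 Q2 R" using cp.marg2 by blast
  have r4: "\<forall>k<3. prb (S1 \<union> S2) ?P (\<lambda>w. c1 (w \<inter> S1) = k \<and> E (w \<inter> S2)) =
         fill (prb S2 Q2 E) (prb S1 Q1 (\<lambda>w. c1 w = 0)) (prb S1 Q1 (\<lambda>w. c1 w = 1)) k"
  proof (intro allI impI)
    fix k :: nat assume k: "k < 3"
    have "prb (S1 \<union> S2) ?P (\<lambda>w. c1 (w \<inter> S1) = k \<and> E (w \<inter> S2)) =
        prb (S1 \<union> S2) ?P (\<lambda>w. c1 (w \<inter> S1) = k \<and> c2 (w \<inter> S2) = 1)"
      by (rule prb_cong) (auto simp: c2_def)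
    also have "\<dots> = J k 1" using k by (intro cp.classprob) auto
    finally show "prb (S1 \<union> S2) ?P (\<lambda>w. c1 (w \<inter> S1) = k \<and> E (w \<inter> S2)) =
         fill (prb S2 Q2 E) (prb S1 Q1 (\<lambda>w. c1 w = 0)) (prb S1 Q1 (\<lambda>w. c1 w = 1)) k"
      using k unfolding J_def F_def m_def e_def by simp
  qed
  have r5: "\<forall>w. Q1 (w \<inter> S1) = 0 \<longrightarrow> ?P w = 0" using cp.cpl_zero1 by blast
  have r6: "\<forall>w. Q2 (w \<inter> S2) = 0 \<longrightarrow> ?P w = 0" using cp.cpl_zero2 by blast
  have r7: "prb S2 Q2 E \<le> prb S1 Q1 (\<lambda>w. c1 w = 0) + prb S1 Q1 (\<lambda>w. c1 w = 1) \<longrightarrow>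
        (\<forall>w. c1 (w \<inter> S1) = 2 \<longrightarrow> E (w \<inter> S2) \<longrightarrow> ?P w = 0)"
  proof (intro allI impI)
    fix w assume le0: "prb S2 Q2 E \<le> prb S1 Q1 (\<lambda>w. c1 w = 0) + prb S1 Q1 (\<lambda>w. c1 w = 1)"
      and c: "c1 (w \<inter> S1) = 2" and E: "E (w \<inter> S2)"
    have le: "e \<le> m 0 + m 1" using le0 unfolding m_def e_def .
    have "J (c1 (w \<inter> S1)) (c2 (w \<inter> S2)) = 0"
      using c E fill2_zero[OF e01(1) mnn mnn le] unfolding J_def F_def c2_def by simp
    thus "?P w = 0" by (rule cp.cpl_zeroJ)
  qed
  show ?thesis by (rule that[OF r1 r2 r3 r4 r5 r6 r7])
qed


definition Fr :: "('a \<Rightarrow> real) \<Rightarrow> 'a set \<Rightarrow> real" where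
  "Fr p S = max 0 ((\<Sum>t\<in>S. p t) - real (card S) + 1)"

lemma marg_exists:
  assumes f: "finite S" and d: "pd S Q" and sub: "S' \<subseteq> S"
  shows "\<exists>Q'. pd S' Q' \<and> (\<forall>R. prb S' Q' R = prb S Q (\<lambda>w. R (w \<inter> S')))
     \<and> (\<forall>w'. w' \<subseteq> S' \<longrightarrow> Q' w' = prb S Q (\<lambda>w. w \<inter> S' = w'))"
proof -
  define Q' where "Q' = (\<lambda>w'. if w' \<subseteq> S' then prb S Q (\<lambda>w. w \<inter> S' = w') else 0)"
  have f': "finite S'" using sub f by (rule finite_subset)
  have pr: "prb S' Q' R = prb S Q (\<lambda>w. R (w \<inter> S'))" for R
  proof -
    have "prb S' Q' R = (\<Sum>w'\<in>Pow S'. if R w' then Q' w' else 0)" using f' by (rule prb_if)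
    also have "\<dots> = (\<Sum>w'\<in>Pow S'. \<Sum>w\<in>{w\<in>Pow S. w \<inter> S' = w'}. if R (w \<inter> S') then Q w else 0)"
    proof (rule sum.cong)
      fix w' assume w': "w' \<in> Pow S'"
      have "(\<Sum>w\<in>{w\<in>Pow S. w \<inter> S' = w'}. if R (w \<inter> S') then Q w else 0) =
            (\<Sum>w\<in>{w\<in>Pow S. w \<inter> S' = w'}. if R w' then Q w else 0)" by (rule sum.cong) auto
      also have "\<dots> = (if R w' then prb S Q (\<lambda>w. w \<inter> S' = w') else 0)" unfolding prb_def by simp
      finally show "(if R w' then Q' w' else 0) = (\<Sum>w\<in>{w\<in>Pow S. w \<inter> S' = w'}. if R (w \<inter> S') then Q w else 0)"
        using w' unfolding Q'_def by simp
    qed simp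
    also have "\<dots> = (\<Sum>w\<in>Pow S. if R (w \<inter> S') then Q w else 0)"
      using f f' by (intro sum.group) auto
    also have "\<dots> = prb S Q (\<lambda>w. R (w \<inter> S'))" using f by (simp add: prb_if)
    finally show ?thesis .
  qed
  have "pd S' Q'"
  proof -
    have "0 \<le> Q' w" for w unfolding Q'_def using prb_nonneg[OF d] by simp
    moreover have "prb S' Q' (\<lambda>w. True) = 1" using pr[of "\<lambda>w. True"] prb_True[OF f d] by simp
    hence "sum Q' (Pow S') = 1" unfolding prb_def by (simp add: Pow_def)
    ultimately show ?thesis unfolding pd_def Q'_def by auto
  qed
  thus ?thesis using pr by (intro exI[of _ Q']) (auto simp: Q'_def)
qed

lemma marg_forbid:
  assumes "\<forall>w'. w' \<subseteq> S' \<longrightarrow> Q' w' = prb S Q (\<lambda>w. w \<inter> S' = w')"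
    and "e \<subseteq> S'" and "\<forall>w. w \<subseteq> S \<longrightarrow> e \<subseteq> w \<longrightarrow> Q w = 0"
  shows "\<forall>w'. w' \<subseteq> S' \<longrightarrow> e \<subseteq> w' \<longrightarrow> Q' w' = 0"
  using assms by (auto intro!: prb_zero)

lemma interp_Un:
  assumes "pd (S1 \<union> S2) Pr"
    and "\<forall>R. prb (S1 \<union> S2) Pr (\<lambda>w. R (w \<inter> S1)) = prb S1 Q1 R"
    and "\<forall>R. prb (S1 \<union> S2) Pr (\<lambda>w. R (w \<inter> S2)) = prb S2 Q2 R"
    and "interp S1 p Q1" and "interp S2 p Q2"
  shows "interp (S1 \<union> S2) p Pr"
  unfolding interp_pd
proof (intro conjI ballI)
  show "pd (S1 \<union> S2) Pr" by fact
  fix t assume t: "t \<in> S1 \<union> S2"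
  show "prb (S1 \<union> S2) Pr (\<lambda>w. t \<in> w) = p t"
  proof (cases "t \<in> S1")
    case True
    have "prb (S1 \<union> S2) Pr (\<lambda>w. t \<in> w) = prb (S1 \<union> S2) Pr (\<lambda>w. (\<lambda>x. t \<in> x) (w \<inter> S1))"
      using True by (intro prb_cong) auto
    also have "\<dots> = prb S1 Q1 (\<lambda>x. t \<in> x)" by (rule assms(2)[rule_format])
    finally show ?thesis using assms(4) True unfolding interp_pd by simp
  next
    case False hence T: "t \<in> S2" using t by auto
    have "prb (S1 \<union> S2) Pr (\<lambda>w. t \<in> w) = prb (S1 \<union> S2) Pr (\<lambda>w. (\<lambda>x. t \<in> x) (w \<inter> S2))"
      using T by (intro prb_cong) auto
    also have "\<dots> = prb S2 Q2 (\<lambda>x. t \<in> x)" by (rule assms(3)[rule_format])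
    finally show ?thesis using assms(5) T unfolding interp_pd by simp
  qed
qed

lemma marg_interp:
  assumes "interp S p Q" "\<forall>R. prb S' Q' R = prb S Q (\<lambda>w. R (w \<inter> S'))" "pd S' Q'" "S' \<subseteq> S"
  shows "interp S' p Q'"
  unfolding interp_pd
proof (intro conjI ballI)
  show "pd S' Q'" by fact
  fix t assume t: "t \<in> S'"
  have "prb S' Q' (\<lambda>w. t \<in> w) = prb S Q (\<lambda>w. t \<in> w \<inter> S')" using assms(2) by simp
  also have "\<dots> = prb S Q (\<lambda>w. t \<in> w)" using t by (intro prb_cong) auto
  finally show "prb S' Q' (\<lambda>w. t \<in> w) = p t" using assms(1) assms(4) t unfolding interp_pd by auto
qed

lemma Fr_bounds: "(\<forall>t\<in>S. p t \<le> 1) \<Longrightarrow> 0 \<le> Fr p S \<and> Fr p S \<le> 1"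
proof -
  assume a: "\<forall>t\<in>S. p t \<le> 1"
  have "(\<Sum>t\<in>S. p t) \<le> (\<Sum>t\<in>S. 1)" using a by (intro sum_mono) auto
  thus ?thesis unfolding Fr_def by auto
qed

lemma frech_exists:
  assumes "finite S" and "\<forall>t\<in>S. 0 \<le> p t \<and> p t \<le> 1"
  shows "\<exists>Q. interp S p Q \<and> prb S Q (\<lambda>w. S \<subseteq> w) = Fr p S"
  using assms
proof (induction S rule: finite_induct)
  case empty
  define Q :: "'a set \<Rightarrow> real" where "Q = (\<lambda>w. if w = {} then 1 else 0)"
  have "interp {} p Q" unfolding interp_def Q_def by auto
  moreover have "prb {} Q (\<lambda>w. {} \<subseteq> w) = 1" unfolding prb_def Q_def by simp
  ultimately show ?case unfolding Fr_def by auto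
next
  case (insert t S)
  then obtain Q1 where Q1: "interp S p Q1" "prb S Q1 (\<lambda>w. S \<subseteq> w) = Fr p S" by auto
  define Q2 :: "'a set \<Rightarrow> real" where "Q2 = (\<lambda>w. if w = {t} then p t else if w = {} then 1 - p t else 0)"
  have P1: "Pow {t} = {{}, {t}}" by blast
  have i2: "interp {t} p Q2" unfolding interp_pd
  proof
    show "pd {t} Q2" unfolding pd_def Q2_def using insert.prems by (auto simp: P1 subset_singleton_iff)
    have "prb {t} Q2 (\<lambda>w. t \<in> w) = (\<Sum>w\<in>{{}, {t}}. if t \<in> w then Q2 w else 0)"
      by (simp only: prb_if[OF finite.insertI[OF finite.emptyI]] P1)
    also have "\<dots> = p t" unfolding Q2_def by simp
    finally show "\<forall>x\<in>{t}. prb {t} Q2 (\<lambda>w. x \<in> w) = p x" by simp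
  qed
  have d1: "pd S Q1" and d2: "pd {t} Q2" using Q1 i2 unfolding interp_pd by auto
  have dj: "S \<inter> {t} = {}" using insert by auto
  define c1 :: "'a set \<Rightarrow> nat" where "c1 = (\<lambda>w. if S \<subseteq> w then 1 else 0)"
  have c3: "\<And>w. c1 w < 3" unfolding c1_def by simp
  obtain Pr where Pr: "pd (S \<union> {t}) Pr"
     "\<forall>R. prb (S \<union> {t}) Pr (\<lambda>w. R (w \<inter> S)) = prb S Q1 R"
     "\<forall>R. prb (S \<union> {t}) Pr (\<lambda>w. R (w \<inter> {t})) = prb {t} Q2 R"
     "\<forall>k<3. prb (S \<union> {t}) Pr (\<lambda>w. c1 (w \<inter> S) = k \<and> t \<in> w \<inter> {t}) =
        fill (prb {t} Q2 (\<lambda>w. t \<in> w)) (prb S Q1 (\<lambda>w. c1 w = 0)) (prb S Q1 (\<lambda>w. c1 w = 1)) k"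
    by (rule G3[OF insert.hyps(1) finite.insertI[OF finite.emptyI] dj d1 d2 c3, where E="\<lambda>w. t \<in> w"])
  have ins: "insert t S = S \<union> {t}" by auto
  have it: "interp (insert t S) p Pr" unfolding ins
    by (rule interp_Un[OF Pr(1-3) Q1(1) i2])
  let ?a = "Fr p S"
  have e: "prb {t} Q2 (\<lambda>w. t \<in> w) = p t" using i2 unfolding interp_pd by auto
  have m1: "prb S Q1 (\<lambda>w. c1 w = 1) = ?a"
  proof -
    have "prb S Q1 (\<lambda>w. c1 w = 1) = prb S Q1 (\<lambda>w. S \<subseteq> w)" unfolding c1_def by (rule prb_cong) auto
    thus ?thesis using Q1(2) by simp
  qed
  have m0: "prb S Q1 (\<lambda>w. c1 w = 0) = 1 - ?a"
  proof -
    have "prb S Q1 (\<lambda>w. c1 w = 0) = prb S Q1 (\<lambda>w. \<not> S \<subseteq> w)" unfolding c1_def by (rule prb_cong) auto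
    thus ?thesis using prb_compl[OF insert.hyps(1) d1] Q1(2) by simp
  qed
  have "prb (insert t S) Pr (\<lambda>w. insert t S \<subseteq> w) = prb (S \<union> {t}) Pr (\<lambda>w. c1 (w \<inter> S) = 1 \<and> t \<in> w \<inter> {t})"
    unfolding ins by (rule prb_cong) (auto simp: c1_def)
  also have "\<dots> = fill (p t) (1 - ?a) ?a 1" using Pr(4) e m0 m1 by simp
  also have "\<dots> = Fr p (insert t S)"
  proof -
    have b: "0 \<le> p t" "p t \<le> 1" using insert.prems by auto
    have c: "real (card (insert t S)) = real (card S) + 1" using insert.hyps by simp
    have s: "(\<Sum>x\<in>insert t S. p x) = p t + (\<Sum>x\<in>S. p x)" using insert.hyps by simp
    have a01: "0 \<le> ?a" "?a \<le> 1" using Fr_bounds[of S p] insert.prems by auto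
    have "fill (p t) (1 - ?a) ?a 1 = max 0 (p t + ?a - 1)"
      unfolding fill_def using b a01 by (simp add: min_def max_def)
    also have "\<dots> = Fr p (insert t S)"
    proof (cases "(\<Sum>x\<in>S. p x) - real (card S) + 1 \<ge> 0")
      case True
      hence "?a = (\<Sum>x\<in>S. p x) - real (card S) + 1" unfolding Fr_def by simp
      thus ?thesis unfolding Fr_def c s by simp
    next
      case False
      hence "?a = 0" unfolding Fr_def by simp
      thus ?thesis unfolding Fr_def c s using False b by simp
    qed
    finally show ?thesis .
  qed
  finally show ?case using it by auto
qed

lemma frech_lower:
  assumes f: "finite S" and i: "interp S p Q" and g: "G \<subseteq> S"
  shows "Fr p G \<le> prb S Q (\<lambda>w. G \<subseteq> w)"
proof -
  have d: "pd S Q" using i unfolding interp_pd by auto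
  have fG: "finite G" using g f by (rule finite_subset)
  from fG g show ?thesis
  proof (induction G rule: finite_induct)
    case empty
    show ?case unfolding Fr_def using prb_True[OF f d] by simp
  next
    case (insert t G)
    have IH: "Fr p G \<le> prb S Q (\<lambda>w. G \<subseteq> w)" using insert by auto
    have pt: "prb S Q (\<lambda>w. t \<in> w) = p t" using i insert.prems unfolding interp_pd by auto
    have "prb S Q (\<lambda>w. G \<subseteq> w) + prb S Q (\<lambda>w. t \<in> w) - 1 \<le> prb S Q (\<lambda>w. G \<subseteq> w \<and> t \<in> w)"
      by (rule prb_and_ge[OF f d])
    also have "\<dots> = prb S Q (\<lambda>w. insert t G \<subseteq> w)" by (rule prb_cong) auto
    finally have a: "prb S Q (\<lambda>w. G \<subseteq> w) + p t - 1 \<le> prb S Q (\<lambda>w. insert t G \<subseteq> w)" using pt by simp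
    have c: "real (card (insert t G)) = real (card G) + 1" using insert.hyps by simp
    have s: "(\<Sum>x\<in>insert t G. p x) = p t + (\<Sum>x\<in>G. p x)" using insert.hyps by simp
    have "(\<Sum>x\<in>G. p x) - real (card G) + 1 \<le> Fr p G" unfolding Fr_def by simp
    thus ?case using a IH prb_nonneg[OF d, of "\<lambda>w. insert t G \<subseteq> w"] unfolding Fr_def c s by auto
  qed
qed


lemma Fr_Un_ge:
  assumes "finite A" "finite B" "A \<inter> B = {}" "\<forall>t\<in>A \<union> B. p t \<le> 1"
  shows "Fr p A + Fr p B - 1 \<le> Fr p (A \<union> B)"
proof -
  have c: "real (card (A \<union> B)) = real (card A) + real (card B)" using assms by (simp add: card_Un_disjoint)
  have s: "(\<Sum>t\<in>A \<union> B. p t) = (\<Sum>t\<in>A. p t) + (\<Sum>t\<in>B. p t)" using assms sum.union_disjoint by blast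
  have "Fr p A \<le> 1" "Fr p B \<le> 1" using Fr_bounds[of A p] Fr_bounds[of B p] assms(4) by auto
  thus ?thesis unfolding Fr_def c s by (auto simp: max_def)
qed

lemma RED:
  assumes f: "finite S" and i: "interp S p Q" and p01: "\<forall>t\<in>S. 0 \<le> p t \<and> p t \<le> 1"
    and aS: "\<alpha> \<subseteq> S" and kS: "ek \<subseteq> S" and ka: "ek \<inter> \<alpha> = {}" and vS: "V \<subseteq> S" and va: "V \<inter> \<alpha> = {}"
    and forb: "\<forall>w. w \<subseteq> S \<longrightarrow> \<alpha> \<union> ek \<subseteq> w \<longrightarrow> Q w = 0"
  obtains Q' where "interp S p Q'"
    "\<forall>e'. e' \<subseteq> S \<longrightarrow> e' \<inter> \<alpha> = {} \<longrightarrow> (\<forall>w. w \<subseteq> S \<longrightarrow> e' \<subseteq> w \<longrightarrow> Q w = 0) \<longrightarrow> (\<forall>w. w \<subseteq> S \<longrightarrow> e' \<subseteq> w \<longrightarrow> Q' w = 0)"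
    "\<forall>w. w \<subseteq> S \<longrightarrow> \<alpha> \<union> ek \<subseteq> w \<longrightarrow> Q' w = 0"
    "prb S Q' (\<lambda>w. \<alpha> \<subseteq> w) = Fr p \<alpha>"
    "prb S Q' (\<lambda>w. \<alpha> \<union> V \<subseteq> w) \<le> prb S Q (\<lambda>w. \<alpha> \<union> V \<subseteq> w)"
    "\<forall>Z. Z \<subseteq> S \<longrightarrow> Z \<inter> \<alpha> = {} \<longrightarrow> prb S Q' (\<lambda>w. Z \<subseteq> w) = prb S Q (\<lambda>w. Z \<subseteq> w)"
proof -
  have d: "pd S Q" using i unfolding interp_pd by auto
  define S1 where "S1 = S - \<alpha>"
  have f1: "finite S1" unfolding S1_def using f by simp
  have fa: "finite \<alpha>" using aS f by (rule finite_subset)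
  have dj: "S1 \<inter> \<alpha> = {}" unfolding S1_def by auto
  have SU: "S1 \<union> \<alpha> = S" unfolding S1_def using aS by auto
  obtain Q1 where Q1: "pd S1 Q1" "\<forall>R. prb S1 Q1 R = prb S Q (\<lambda>w. R (w \<inter> S1))"
      "\<forall>w'. w' \<subseteq> S1 \<longrightarrow> Q1 w' = prb S Q (\<lambda>w. w \<inter> S1 = w')"
    using marg_exists[OF f d, of S1] unfolding S1_def by auto
  have i1: "interp S1 p Q1" by (rule marg_interp[OF i Q1(2) Q1(1)]) (auto simp: S1_def)
  obtain Q2 where Q2: "interp \<alpha> p Q2" "prb \<alpha> Q2 (\<lambda>w. \<alpha> \<subseteq> w) = Fr p \<alpha>"
    using frech_exists[OF fa, of p] p01 aS by auto
  have d1: "pd S1 Q1" and d2: "pd \<alpha> Q2" using Q1 Q2 unfolding interp_pd by auto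
  define c1 :: "'a set \<Rightarrow> nat" where "c1 = (\<lambda>w. if ek \<subseteq> w then 2 else if V \<subseteq> w then 1 else 0)"
  have c3: "\<And>w. c1 w < 3" unfolding c1_def by simp
  obtain Pr where Pr: "pd (S1 \<union> \<alpha>) Pr"
     "\<forall>R. prb (S1 \<union> \<alpha>) Pr (\<lambda>w. R (w \<inter> S1)) = prb S1 Q1 R"
     "\<forall>R. prb (S1 \<union> \<alpha>) Pr (\<lambda>w. R (w \<inter> \<alpha>)) = prb \<alpha> Q2 R"
     "\<forall>k<3. prb (S1 \<union> \<alpha>) Pr (\<lambda>w. c1 (w \<inter> S1) = k \<and> \<alpha> \<subseteq> w \<inter> \<alpha>) =
        fill (prb \<alpha> Q2 (\<lambda>w. \<alpha> \<subseteq> w)) (prb S1 Q1 (\<lambda>w. c1 w = 0)) (prb S1 Q1 (\<lambda>w. c1 w = 1)) k"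
     "\<forall>w. Q1 (w \<inter> S1) = 0 \<longrightarrow> Pr w = 0"
     "\<forall>w. Q2 (w \<inter> \<alpha>) = 0 \<longrightarrow> Pr w = 0"
     "prb \<alpha> Q2 (\<lambda>w. \<alpha> \<subseteq> w) \<le> prb S1 Q1 (\<lambda>w. c1 w = 0) + prb S1 Q1 (\<lambda>w. c1 w = 1) \<longrightarrow>
        (\<forall>w. c1 (w \<inter> S1) = 2 \<longrightarrow> \<alpha> \<subseteq> w \<inter> \<alpha> \<longrightarrow> Pr w = 0)"
    by (rule G3[OF f1 fa dj d1 d2 c3, where E="\<lambda>w. \<alpha> \<subseteq> w"])
  note Pr = Pr[unfolded SU]
  have iP: "interp S p Pr" using interp_Un[OF Pr(1-3)[folded SU] i1 Q2(1)] SU by simp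
  let ?e = "Fr p \<alpha>"
  let ?m0 = "prb S1 Q1 (\<lambda>w. c1 w = 0)" and ?m1 = "prb S1 Q1 (\<lambda>w. c1 w = 1)"
  have e01: "0 \<le> ?e" "?e \<le> 1" using Fr_bounds[of \<alpha> p] p01 aS by auto
  have mnn: "0 \<le> prb S1 Q1 R" for R by (rule prb_nonneg[OF d1])
  have tr: "prb S1 Q1 R = prb S Q R'" if "\<And>w. w \<subseteq> S \<Longrightarrow> R (w \<inter> S1) = R' w" for R R'
  proof -
    have "prb S1 Q1 R = prb S Q (\<lambda>w. R (w \<inter> S1))" using Q1(2) by simp
    also have "\<dots> = prb S Q R'" by (rule prb_cong) (rule that)
    finally show ?thesis .
  qed
  have m2: "prb S1 Q1 (\<lambda>w. c1 w = 2) = prb S Q (\<lambda>w. ek \<subseteq> w)"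
    by (rule tr) (use kS ka in \<open>auto simp: c1_def S1_def\<close>)
  have m0: "?m0 = prb S Q (\<lambda>w. \<not> ek \<subseteq> w \<and> \<not> V \<subseteq> w)"
    by (rule tr) (use kS ka vS va in \<open>auto simp: c1_def S1_def\<close>)
  have m012: "?m0 + ?m1 + prb S1 Q1 (\<lambda>w. c1 w = 2) = 1" by (rule prb_three[OF f1 d1 c3])
  have lowa: "?e \<le> prb S Q (\<lambda>w. \<alpha> \<subseteq> w)" by (rule frech_lower[OF f i aS])
  have zak: "prb S Q (\<lambda>w. \<alpha> \<subseteq> w \<and> ek \<subseteq> w) = 0"
    by (rule prb_zero) (use forb in auto)
  have "prb S Q (\<lambda>w. \<alpha> \<subseteq> w) + prb S Q (\<lambda>w. ek \<subseteq> w) - 1 \<le> prb S Q (\<lambda>w. \<alpha> \<subseteq> w \<and> ek \<subseteq> w)"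
    by (rule prb_and_ge[OF f d])
  hence le: "?e \<le> ?m0 + ?m1" using lowa zak m2 m012 by linarith
  show ?thesis
  proof (rule that)
    show "interp S p Pr" by fact
    show "\<forall>e'. e' \<subseteq> S \<longrightarrow> e' \<inter> \<alpha> = {} \<longrightarrow> (\<forall>w. w \<subseteq> S \<longrightarrow> e' \<subseteq> w \<longrightarrow> Q w = 0) \<longrightarrow> (\<forall>w. w \<subseteq> S \<longrightarrow> e' \<subseteq> w \<longrightarrow> Pr w = 0)"
    proof (intro allI impI)
      fix e' w assume e': "e' \<subseteq> S" "e' \<inter> \<alpha> = {}" "\<forall>w. w \<subseteq> S \<longrightarrow> e' \<subseteq> w \<longrightarrow> Q w = 0" and w: "w \<subseteq> S" "e' \<subseteq> w"
      have "e' \<subseteq> S1" using e' unfolding S1_def by auto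
      hence "Q1 (w \<inter> S1) = 0" using marg_forbid[OF Q1(3)] e' w by auto
      thus "Pr w = 0" using Pr(5) by auto
    qed
    show "\<forall>w. w \<subseteq> S \<longrightarrow> \<alpha> \<union> ek \<subseteq> w \<longrightarrow> Pr w = 0"
    proof (intro allI impI)
      fix w assume w: "w \<subseteq> S" "\<alpha> \<union> ek \<subseteq> w"
      have "c1 (w \<inter> S1) = 2" using w kS ka unfolding c1_def S1_def by auto
      moreover have "\<alpha> \<subseteq> w \<inter> \<alpha>" using w by auto
      ultimately show "Pr w = 0" using Pr(7) le Q2(2) by auto
    qed
    have "prb S Pr (\<lambda>w. \<alpha> \<subseteq> w) = prb S Pr (\<lambda>w. (\<lambda>x. \<alpha> \<subseteq> x) (w \<inter> \<alpha>))" by (rule prb_cong) auto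
    also have "\<dots> = prb \<alpha> Q2 (\<lambda>x. \<alpha> \<subseteq> x)" by (rule Pr(3)[rule_format])
    finally show "prb S Pr (\<lambda>w. \<alpha> \<subseteq> w) = Fr p \<alpha>" using Q2(2) by simp
    have dP: "pd S Pr" using iP unfolding interp_pd by auto
    have "prb S Pr (\<lambda>w. \<alpha> \<union> V \<subseteq> w) \<le> prb S Pr (\<lambda>w. (c1 (w \<inter> S1) = 1 \<and> \<alpha> \<subseteq> w \<inter> \<alpha>) \<or> (c1 (w \<inter> S1) = 2 \<and> \<alpha> \<subseteq> w \<inter> \<alpha>))"
      by (rule prb_mono[OF f dP]) (use vS va in \<open>auto simp: c1_def S1_def\<close>)
    also have "\<dots> \<le> prb S Pr (\<lambda>w. c1 (w \<inter> S1) = 1 \<and> \<alpha> \<subseteq> w \<inter> \<alpha>) + prb S Pr (\<lambda>w. c1 (w \<inter> S1) = 2 \<and> \<alpha> \<subseteq> w \<inter> \<alpha>)"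
      by (rule prb_or_le[OF f dP])
    also have "\<dots> = fill ?e ?m0 ?m1 1 + fill ?e ?m0 ?m1 2" using Pr(4) Q2(2) by simp
    also have "\<dots> = max 0 (?e - ?m0)" by (rule fill12[OF e01(1) mnn mnn])
    also have "\<dots> \<le> prb S Q (\<lambda>w. \<alpha> \<union> V \<subseteq> w)"
    proof -
      have s1: "prb S Q (\<lambda>w. \<alpha> \<subseteq> w) = prb S Q (\<lambda>w. \<alpha> \<subseteq> w \<and> V \<subseteq> w) + prb S Q (\<lambda>w. \<alpha> \<subseteq> w \<and> \<not> V \<subseteq> w)"
        by (rule prb_split[OF f])
      have s2: "prb S Q (\<lambda>w. \<alpha> \<subseteq> w \<and> \<not> V \<subseteq> w) = prb S Q (\<lambda>w. (\<alpha> \<subseteq> w \<and> \<not> V \<subseteq> w) \<and> ek \<subseteq> w) + prb S Q (\<lambda>w. (\<alpha> \<subseteq> w \<and> \<not> V \<subseteq> w) \<and> \<not> ek \<subseteq> w)"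
        by (rule prb_split[OF f])
      have s3: "prb S Q (\<lambda>w. (\<alpha> \<subseteq> w \<and> \<not> V \<subseteq> w) \<and> ek \<subseteq> w) = 0" by (rule prb_zero) (use forb in auto)
      have s4: "prb S Q (\<lambda>w. (\<alpha> \<subseteq> w \<and> \<not> V \<subseteq> w) \<and> \<not> ek \<subseteq> w) \<le> ?m0" unfolding m0 by (rule prb_mono[OF f d]) auto
      have s5: "prb S Q (\<lambda>w. \<alpha> \<subseteq> w \<and> V \<subseteq> w) = prb S Q (\<lambda>w. \<alpha> \<union> V \<subseteq> w)" by (rule prb_cong) auto
      have "0 \<le> prb S Q (\<lambda>w. \<alpha> \<union> V \<subseteq> w)" by (rule prb_nonneg[OF d])
      thus ?thesis using s1 s2 s3 s4 s5 lowa by linarith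
    qed
    finally show "prb S Pr (\<lambda>w. \<alpha> \<union> V \<subseteq> w) \<le> prb S Q (\<lambda>w. \<alpha> \<union> V \<subseteq> w)" .
    show "\<forall>Z. Z \<subseteq> S \<longrightarrow> Z \<inter> \<alpha> = {} \<longrightarrow> prb S Pr (\<lambda>w. Z \<subseteq> w) = prb S Q (\<lambda>w. Z \<subseteq> w)"
    proof (intro allI impI)
      fix Z assume Z: "Z \<subseteq> S" "Z \<inter> \<alpha> = {}"
      have ZS: "Z \<subseteq> S1" using Z unfolding S1_def by auto
      have "prb S Pr (\<lambda>w. Z \<subseteq> w) = prb S Pr (\<lambda>w. (\<lambda>x. Z \<subseteq> x) (w \<inter> S1))" using ZS by (intro prb_cong) auto
      also have "\<dots> = prb S1 Q1 (\<lambda>x. Z \<subseteq> x)" by (rule Pr(2)[rule_format])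
      also have "\<dots> = prb S Q (\<lambda>w. Z \<subseteq> w)" by (rule tr) (use ZS in auto)
      finally show "prb S Pr (\<lambda>w. Z \<subseteq> w) = prb S Q (\<lambda>w. Z \<subseteq> w)" .
    qed
  qed
qed


definition feas :: "'a set \<Rightarrow> ('a \<Rightarrow> real) \<Rightarrow> 'a set set \<Rightarrow> ('a set \<Rightarrow> real) \<Rightarrow> bool" where
  "feas T p H Pr \<longleftrightarrow> interp T p Pr \<and> (\<forall>w\<in>Pow T. (\<exists>e\<in>H. e \<subseteq> w) \<longrightarrow> Pr w = 0)"

lemma pmin_alt: "pmin T p H X = Inf {prb T Pr (\<lambda>w. X \<subseteq> w) | Pr. feas T p H Pr}"
  unfolding pmin_def prb_def feas_def ..

lemma pmin_bdd: "bdd_below {prb T Pr (\<lambda>w. X \<subseteq> w) | Pr. feas T p H Pr}"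
proof (rule bdd_belowI[of _ 0])
  fix x assume "x \<in> {prb T Pr (\<lambda>w. X \<subseteq> w) | Pr. feas T p H Pr}"
  then obtain Pr where "x = prb T Pr (\<lambda>w. X \<subseteq> w)" "feas T p H Pr" by blast
  thus "0 \<le> x" using prb_nonneg[of T Pr] unfolding feas_def interp_pd by auto
qed

lemma pmin_le: "feas T p H Pr \<Longrightarrow> pmin T p H X \<le> prb T Pr (\<lambda>w. X \<subseteq> w)"
  unfolding pmin_alt by (rule cInf_lower[OF _ pmin_bdd]) auto

lemma pmin_ge: "feas T p H Pr0 \<Longrightarrow> (\<And>Pr. feas T p H Pr \<Longrightarrow> c \<le> prb T Pr (\<lambda>w. X \<subseteq> w)) \<Longrightarrow> c \<le> pmin T p H X"
  unfolding pmin_alt by (rule cInf_greatest) auto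

lemma pmin_approx:
  assumes "feas T p H Pr0" "0 < \<epsilon>"
  obtains Pr where "feas T p H Pr" "prb T Pr (\<lambda>w. X \<subseteq> w) < pmin T p H X + \<epsilon>"
proof -
  let ?A = "{prb T Pr (\<lambda>w. X \<subseteq> w) | Pr. feas T p H Pr}"
  have lt: "Inf ?A < pmin T p H X + \<epsilon>" using assms(2) unfolding pmin_alt by simp
  have ne: "?A \<noteq> {}" using assms(1) by auto
  have "\<exists>x\<in>?A. x < pmin T p H X + \<epsilon>" using cInf_less_iff[OF ne pmin_bdd] lt by simp
  then obtain x where x: "x \<in> ?A" "x < pmin T p H X + \<epsilon>" by (rule bexE)
  from x(1) obtain Pr where "x = prb T Pr (\<lambda>w. X \<subseteq> w)" "feas T p H Pr" by auto
  thus ?thesis using that x(2) by auto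
qed

lemma feas_mono: "feas T p H Pr \<Longrightarrow> H' \<subseteq> H \<Longrightarrow> feas T p H' Pr"
  unfolding feas_def by blast

lemma feas_I: "interp T p Pr \<Longrightarrow> (\<And>e' w. e' \<in> H \<Longrightarrow> w \<subseteq> T \<Longrightarrow> e' \<subseteq> w \<Longrightarrow> Pr w = 0) \<Longrightarrow> feas T p H Pr"
  unfolding feas_def by blast

lemma feas_D: "feas T p H Pr \<Longrightarrow> e' \<in> H \<Longrightarrow> w \<subseteq> T \<Longrightarrow> e' \<subseteq> w \<Longrightarrow> Pr w = 0"
  unfolding feas_def by blast

lemma max_eps: "q < s + \<epsilon> \<Longrightarrow> 0 < (\<epsilon>::real) \<Longrightarrow> max 0 (a - (1 - q)) \<le> max 0 (s + a - 1) + \<epsilon>"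
  by (simp add: max_def)

lemma claim3_gen:
  assumes fT: "finite T" and p01: "\<forall>t\<in>T. 0 \<le> p t \<and> p t \<le> 1" and g: "\<gamma> \<subseteq> T"
  shows "pmin T p {} \<gamma> = Fr p \<gamma>"
proof -
  have fg: "finite \<gamma>" using g fT by (rule finite_subset)
  obtain Q2 where Q2: "interp \<gamma> p Q2" "prb \<gamma> Q2 (\<lambda>w. \<gamma> \<subseteq> w) = Fr p \<gamma>"
    using frech_exists[OF fg, of p] p01 g by auto
  have f1: "finite (T - \<gamma>)" using fT by simp
  obtain Q1 where Q1: "interp (T - \<gamma>) p Q1"
    using frech_exists[OF f1, of p] p01 by auto
  have d1: "pd (T - \<gamma>) Q1" and d2: "pd \<gamma> Q2" using Q1 Q2 unfolding interp_pd by auto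
  have dj: "(T - \<gamma>) \<inter> \<gamma> = {}" by auto
  have c3: "\<And>w. (\<lambda>w. 0::nat) w < 3" by simp
  obtain Pr where Pr: "pd ((T - \<gamma>) \<union> \<gamma>) Pr"
     "\<forall>R. prb ((T - \<gamma>) \<union> \<gamma>) Pr (\<lambda>w. R (w \<inter> (T - \<gamma>))) = prb (T - \<gamma>) Q1 R"
     "\<forall>R. prb ((T - \<gamma>) \<union> \<gamma>) Pr (\<lambda>w. R (w \<inter> \<gamma>)) = prb \<gamma> Q2 R"
    by (rule G3[OF f1 fg dj d1 d2 c3, where E="\<lambda>w. True"]) blast
  have TU: "(T - \<gamma>) \<union> \<gamma> = T" using g by auto
  have iP: "interp T p Pr" using interp_Un[OF Pr Q1 Q2(1)] TU by simp
  have fe: "feas T p {} Pr" using iP unfolding feas_def by simp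
  have "prb T Pr (\<lambda>w. \<gamma> \<subseteq> w) = prb T Pr (\<lambda>w. (\<lambda>x. \<gamma> \<subseteq> x) (w \<inter> \<gamma>))" by (rule prb_cong) auto
  also have "\<dots> = prb \<gamma> Q2 (\<lambda>x. \<gamma> \<subseteq> x)" using Pr(3)[unfolded TU] by (rule spec)
  also have "\<dots> = Fr p \<gamma>" by (rule Q2(2))
  finally have v: "prb T Pr (\<lambda>w. \<gamma> \<subseteq> w) = Fr p \<gamma>" .
  show ?thesis
  proof (rule antisym)
    show "pmin T p {} \<gamma> \<le> Fr p \<gamma>" using pmin_le[OF fe] v by metis
    show "Fr p \<gamma> \<le> pmin T p {} \<gamma>"
      by (rule pmin_ge[OF fe]) (rule frech_lower[OF fT _ g], auto simp: feas_def)
  qed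
qed

lemma claim2_gen:
  assumes fT: "finite T" and p01: "\<forall>t\<in>T. 0 \<le> p t \<and> p t \<le> 1" and Pm: "feas T p H Pm"
    and Y: "Y \<subseteq> T" and R: "R \<subseteq> T" and YR: "Y \<inter> R = {}"
    and He: "\<forall>e'\<in>H. e' \<subseteq> T \<and> e' \<inter> R = {}"
  shows "pmin T p H (Y \<union> R) = max 0 (pmin T p H Y + Fr p R - 1)"
proof (rule antisym)
  let ?s = "pmin T p H Y"
  show "max 0 (?s + Fr p R - 1) \<le> pmin T p H (Y \<union> R)"
  proof (rule pmin_ge[OF Pm])
    fix Pr assume fe: "feas T p H Pr"
    have i: "interp T p Pr" and d: "pd T Pr" using fe unfolding feas_def interp_pd by auto
    have "prb T Pr (\<lambda>w. Y \<subseteq> w) + prb T Pr (\<lambda>w. R \<subseteq> w) - 1 \<le> prb T Pr (\<lambda>w. Y \<subseteq> w \<and> R \<subseteq> w)"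
      by (rule prb_and_ge[OF fT d])
    moreover have "prb T Pr (\<lambda>w. Y \<subseteq> w \<and> R \<subseteq> w) = prb T Pr (\<lambda>w. Y \<union> R \<subseteq> w)" by (rule prb_cong) auto
    moreover have "?s \<le> prb T Pr (\<lambda>w. Y \<subseteq> w)" by (rule pmin_le[OF fe])
    moreover have "Fr p R \<le> prb T Pr (\<lambda>w. R \<subseteq> w)" by (rule frech_lower[OF fT i R])
    moreover have "0 \<le> prb T Pr (\<lambda>w. Y \<union> R \<subseteq> w)" by (rule prb_nonneg[OF d])
    ultimately show "max 0 (?s + Fr p R - 1) \<le> prb T Pr (\<lambda>w. Y \<union> R \<subseteq> w)" by linarith
  qed
  show "pmin T p H (Y \<union> R) \<le> max 0 (?s + Fr p R - 1)"
  proof (rule field_le_epsilon)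
    fix \<epsilon> :: real assume ep: "0 < \<epsilon>"
    obtain Q where Q: "feas T p H Q" "prb T Q (\<lambda>w. Y \<subseteq> w) < ?s + \<epsilon>" by (rule pmin_approx[OF Pm ep])
    have iQ: "interp T p Q" and dQ: "pd T Q" using Q unfolding feas_def interp_pd by auto
    define S1 where "S1 = T - R"
    have f1: "finite S1" unfolding S1_def using fT by simp
    have fR: "finite R" using R fT by (rule finite_subset)
    have dj: "S1 \<inter> R = {}" unfolding S1_def by auto
    have SU: "S1 \<union> R = T" unfolding S1_def using R by auto
    obtain Q1 where Q1: "pd S1 Q1" "\<forall>R'. prb S1 Q1 R' = prb T Q (\<lambda>w. R' (w \<inter> S1))"
      "\<forall>w'. w' \<subseteq> S1 \<longrightarrow> Q1 w' = prb T Q (\<lambda>w. w \<inter> S1 = w')"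
      using marg_exists[OF fT dQ, of S1] unfolding S1_def by auto
    have i1: "interp S1 p Q1" by (rule marg_interp[OF iQ Q1(2) Q1(1)]) (auto simp: S1_def)
    obtain Q2 where Q2: "interp R p Q2" "prb R Q2 (\<lambda>w. R \<subseteq> w) = Fr p R"
      using frech_exists[OF fR, of p] p01 R by auto
    have d1: "pd S1 Q1" and d2: "pd R Q2" using Q1 Q2 unfolding interp_pd by auto
    define c1 :: "'a set \<Rightarrow> nat" where "c1 = (\<lambda>w. if Y \<subseteq> w then 1 else 0)"
    have c3: "\<And>w. c1 w < 3" unfolding c1_def by simp
    obtain Pr where Pr: "pd (S1 \<union> R) Pr"
       "\<forall>R'. prb (S1 \<union> R) Pr (\<lambda>w. R' (w \<inter> S1)) = prb S1 Q1 R'"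
       "\<forall>R'. prb (S1 \<union> R) Pr (\<lambda>w. R' (w \<inter> R)) = prb R Q2 R'"
       "\<forall>k<3. prb (S1 \<union> R) Pr (\<lambda>w. c1 (w \<inter> S1) = k \<and> R \<subseteq> w \<inter> R) =
          fill (prb R Q2 (\<lambda>w. R \<subseteq> w)) (prb S1 Q1 (\<lambda>w. c1 w = 0)) (prb S1 Q1 (\<lambda>w. c1 w = 1)) k"
       "\<forall>w. Q1 (w \<inter> S1) = 0 \<longrightarrow> Pr w = 0"
      by (rule G3[OF f1 fR dj d1 d2 c3, where E="\<lambda>w. R \<subseteq> w"])
    have iP: "interp T p Pr" using interp_Un[OF Pr(1-3) i1 Q2(1)] SU by simp
    have fe: "feas T p H Pr"
    proof (rule feas_I[OF iP])
      fix e' w assume e': "e' \<in> H" and w: "w \<subseteq> T" "e' \<subseteq> w"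
      have eS: "e' \<subseteq> S1" using He e' unfolding S1_def by auto
      have "\<forall>w. w \<subseteq> T \<longrightarrow> e' \<subseteq> w \<longrightarrow> Q w = 0" using feas_D[OF Q(1) e'] by blast
      hence "\<forall>w'. w' \<subseteq> S1 \<longrightarrow> e' \<subseteq> w' \<longrightarrow> Q1 w' = 0" by (rule marg_forbid[OF Q1(3) eS])
      moreover have "w \<inter> S1 \<subseteq> S1" "e' \<subseteq> w \<inter> S1" using eS w by auto
      ultimately have "Q1 (w \<inter> S1) = 0" by blast
      thus "Pr w = 0" using Pr(5) by auto
    qed
    have YS: "Y \<subseteq> S1" using Y YR unfolding S1_def by auto
    have m0: "prb S1 Q1 (\<lambda>w. c1 w = 0) = 1 - prb T Q (\<lambda>w. Y \<subseteq> w)"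
    proof -
      have "prb S1 Q1 (\<lambda>w. c1 w = 0) = prb T Q (\<lambda>w. c1 (w \<inter> S1) = 0)" using Q1(2) by simp
      also have "\<dots> = prb T Q (\<lambda>w. \<not> Y \<subseteq> w)" by (rule prb_cong) (use YS in \<open>auto simp: c1_def\<close>)
      also have "\<dots> = 1 - prb T Q (\<lambda>w. Y \<subseteq> w)" by (rule prb_compl[OF fT dQ])
      finally show ?thesis .
    qed
    have mnn: "0 \<le> prb S1 Q1 R'" for R' by (rule prb_nonneg[OF d1])
    have e0: "0 \<le> Fr p R" using Fr_bounds[of R p] p01 R by auto
    have "prb T Pr (\<lambda>w. Y \<union> R \<subseteq> w) = prb (S1 \<union> R) Pr (\<lambda>w. c1 (w \<inter> S1) = 1 \<and> R \<subseteq> w \<inter> R)"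
      unfolding SU by (rule prb_cong) (use YS in \<open>auto simp: c1_def\<close>)
    also have "\<dots> = fill (Fr p R) (prb S1 Q1 (\<lambda>w. c1 w = 0)) (prb S1 Q1 (\<lambda>w. c1 w = 1)) 1"
      using Pr(4) Q2(2) by simp
    also have "\<dots> \<le> max 0 (Fr p R - prb S1 Q1 (\<lambda>w. c1 w = 0))" by (rule fill1_le[OF mnn])
    also have "\<dots> \<le> max 0 (?s + Fr p R - 1) + \<epsilon>" unfolding m0 by (rule max_eps[OF Q(2) ep])
    finally have "prb T Pr (\<lambda>w. Y \<union> R \<subseteq> w) \<le> max 0 (?s + Fr p R - 1) + \<epsilon>" .
    thus "pmin T p H (Y \<union> R) \<le> max 0 (?s + Fr p R - 1) + \<epsilon>" using pmin_le[OF fe, of "Y \<union> R"] by linarith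
  qed
qed


lemma marg_tr:
  assumes "\<forall>R. prb S Pr (\<lambda>w. R (w \<inter> S1)) = prb S1 Q1 R" "\<And>w. w \<subseteq> S \<Longrightarrow> P w = P' (w \<inter> S1)"
  shows "prb S Pr P = prb S1 Q1 P'"
proof -
  have "prb S Pr P = prb S Pr (\<lambda>w. P' (w \<inter> S1))" by (rule prb_cong) (rule assms(2))
  also have "\<dots> = prb S1 Q1 P'" using assms(1) by simp
  finally show ?thesis .
qed

lemma incl:
  assumes f: "finite S" and d: "pd S Q" and z: "prb S Q (\<lambda>w. (P1 w \<or> P2 w) \<and> P3 w) = 0"
  shows "prb S Q P1 + prb S Q P2 + prb S Q P3 - 1 \<le> prb S Q (\<lambda>w. P1 w \<and> P2 w)"
proof -
  have t1: "prb S Q (\<lambda>w. \<not> P1 w) = 1 - prb S Q P1" by (rule prb_compl[OF f d])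
  have t3: "prb S Q (\<lambda>w. \<not> P1 w) = prb S Q (\<lambda>w. \<not> P1 w \<and> P2 w) + prb S Q (\<lambda>w. \<not> P1 w \<and> \<not> P2 w)"
    by (rule prb_split[OF f])
  have t4: "prb S Q P2 = prb S Q (\<lambda>w. P2 w \<and> P1 w) + prb S Q (\<lambda>w. P2 w \<and> \<not> P1 w)"
    by (rule prb_split[OF f])
  have t5: "prb S Q P3 = prb S Q (\<lambda>w. P3 w \<and> (P1 w \<or> P2 w)) + prb S Q (\<lambda>w. P3 w \<and> \<not> (P1 w \<or> P2 w))"
    by (rule prb_split[OF f])
  have t6: "prb S Q (\<lambda>w. P3 w \<and> (P1 w \<or> P2 w)) = 0" using z by (simp add: conj_commute)
  have t7: "prb S Q (\<lambda>w. P3 w \<and> \<not> (P1 w \<or> P2 w)) \<le> prb S Q (\<lambda>w. \<not> P1 w \<and> \<not> P2 w)"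
    by (rule prb_mono[OF f d]) auto
  have t8: "prb S Q (\<lambda>w. P2 w \<and> P1 w) = prb S Q (\<lambda>w. P1 w \<and> P2 w)" by (rule prb_cong) auto
  have t9: "prb S Q (\<lambda>w. P2 w \<and> \<not> P1 w) = prb S Q (\<lambda>w. \<not> P1 w \<and> P2 w)" by (rule prb_cong) auto
  show ?thesis using t1 t3 t4 t5 t6 t7 t8 t9 by linarith
qed

lemma forb_step:
  assumes "\<forall>w. Q1 (w \<inter> S1) = 0 \<longrightarrow> Pr w = 0" "e' \<subseteq> S1" "\<forall>w. w \<subseteq> S1 \<longrightarrow> e' \<subseteq> w \<longrightarrow> Q1 w = 0"
  shows "\<forall>w. w \<subseteq> S \<longrightarrow> e' \<subseteq> w \<longrightarrow> Pr w = 0"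
proof (intro allI impI)
  fix w assume "w \<subseteq> S" "e' \<subseteq> w"
  hence "w \<inter> S1 \<subseteq> S1" "e' \<subseteq> w \<inter> S1" using assms(2) by auto
  hence "Q1 (w \<inter> S1) = 0" using assms(3) by simp
  thus "Pr w = 0" using assms(1) by simp
qed

lemma two_class:
  assumes f: "finite S" and d: "pd S Pr"
    and h: "\<And>w. w \<subseteq> S \<Longrightarrow> P w \<Longrightarrow> E (w \<inter> S2) \<and> (c (w \<inter> S1) = (1::nat) \<or> c (w \<inter> S1) = 2)"
  shows "prb S Pr P \<le> prb S Pr (\<lambda>w. c (w \<inter> S1) = 1 \<and> E (w \<inter> S2)) + prb S Pr (\<lambda>w. c (w \<inter> S1) = 2 \<and> E (w \<inter> S2))"
proof -
  have "prb S Pr P \<le> prb S Pr (\<lambda>w. (c (w \<inter> S1) = 1 \<and> E (w \<inter> S2)) \<or> (c (w \<inter> S1) = 2 \<and> E (w \<inter> S2)))"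
  proof (rule prb_mono[OF f d])
    fix w assume "w \<subseteq> S" "P w"
    from h[OF this] show "(c (w \<inter> S1) = 1 \<and> E (w \<inter> S2)) \<or> (c (w \<inter> S1) = 2 \<and> E (w \<inter> S2))" by auto
  qed
  also have "\<dots> \<le> prb S Pr (\<lambda>w. c (w \<inter> S1) = 1 \<and> E (w \<inter> S2)) + prb S Pr (\<lambda>w. c (w \<inter> S1) = 2 \<and> E (w \<inter> S2))"
    by (rule prb_or_le[OF f d])
  finally show ?thesis .
qed

locale L =
  fixes T :: "'a set" and p :: "'a \<Rightarrow> real" and viol :: "'a set \<Rightarrow> bool"
    and e :: "nat \<Rightarrow> 'a set" and n :: nat and b1 bn :: "'a set"
  assumes pdb: "pdb T p" and den: "denial T viol" and sat: "satisfies T p viol"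
    and ch: "is_chain (conflict_hg T viol) e n" and n1: "n > 1"
    and b1: "b1 \<subseteq> ears e n 1" and bn: "bn \<subseteq> ears e n n"
begin

lemma fT: "finite T" using pdb unfolding pdb_def by auto
lemma p01: "\<forall>t\<in>T. 0 \<le> p t \<and> p t \<le> 1" using pdb unfolding pdb_def by auto

definition "Pm = (SOME Pr. model T p viol Pr)"
lemma Pm_model: "model T p viol Pm"
  using sat unfolding satisfies_def Pm_def by (rule someI_ex)

abbreviation "HG \<equiv> conflict_hg T viol"

lemma Hn: "HG = e ` {1..n}" using ch unfolding is_chain_def by blast

lemma int_iff: "i \<in> {1..n} \<Longrightarrow> j \<in> {1..n} \<Longrightarrow> i \<noteq> j \<Longrightarrow> (e i \<inter> e j \<noteq> {}) = (i = Suc j \<or> j = Suc i)"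
  using ch unfolding is_chain_def by blast

lemma dis: "i \<in> {1..n} \<Longrightarrow> j \<in> {1..n} \<Longrightarrow> i \<noteq> j \<Longrightarrow> i \<noteq> Suc j \<Longrightarrow> j \<noteq> Suc i \<Longrightarrow> e i \<inter> e j = {}"
  using int_iff by blast

lemma eH: "i \<in> {1..n} \<Longrightarrow> e i \<in> HG" using Hn by auto

lemma eT: "i \<in> {1..n} \<Longrightarrow> e i \<subseteq> T" using eH unfolding conflict_hg_def by blast

lemma viol_e: "e' \<in> HG \<Longrightarrow> w \<subseteq> T \<Longrightarrow> e' \<subseteq> w \<Longrightarrow> viol w"
  unfolding conflict_hg_def by blast

lemma Pm_feas: "feas T p HG Pm"
proof (rule feas_I)
  show "interp T p Pm" using Pm_model unfolding model_def by blast
  fix e' w assume "e' \<in> HG" "w \<subseteq> T" "e' \<subseteq> w"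
  hence "viol w" by (rule viol_e)
  thus "Pm w = 0" using Pm_model \<open>w \<subseteq> T\<close> unfolding model_def by blast
qed

lemma feas_e: "feas T p HG Pr \<Longrightarrow> i \<in> {1..n} \<Longrightarrow> w \<subseteq> T \<Longrightarrow> e i \<subseteq> w \<Longrightarrow> Pr w = 0"
  using feas_D eH by blast

lemma feas_HI: "interp T p Pr \<Longrightarrow> (\<And>i w. i \<in> {1..n} \<Longrightarrow> w \<subseteq> T \<Longrightarrow> e i \<subseteq> w \<Longrightarrow> Pr w = 0) \<Longrightarrow> feas T p HG Pr"
  by (rule feas_I) (auto simp only: Hn image_iff)

abbreviation "A1 \<equiv> alpha e 1"
abbreviation "An \<equiv> alpha e (n - 1)"
abbreviation "B1 \<equiv> ears e n 1"
abbreviation "Bn \<equiv> ears e n n"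
abbreviation "R1 \<equiv> B1 - b1"
abbreviation "Rn \<equiv> Bn - bn"
abbreviation "M \<equiv> T - B1 - Bn"
abbreviation "SB \<equiv> sub e n"

lemma n_in: "1 \<in> {1..n}" "n \<in> {1..n}" "2 \<in> {1..n}" "n - 1 \<in> {1..n}" using n1 by auto

lemma A1_def': "A1 = e 1 \<inter> e 2" unfolding alpha_def by (simp add: numeral_2_eq_2)
lemma An_def': "An = e (n - 1) \<inter> e n" unfolding alpha_def using n1 by simp

lemma B1_sub: "B1 \<subseteq> e 1" unfolding ears_def by auto
lemma Bn_sub: "Bn \<subseteq> e n" unfolding ears_def by auto
lemma B1_dis: "j \<in> {1..n} \<Longrightarrow> j \<noteq> 1 \<Longrightarrow> B1 \<inter> e j = {}" unfolding ears_def by auto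
lemma Bn_dis: "j \<in> {1..n} \<Longrightarrow> j \<noteq> n \<Longrightarrow> Bn \<inter> e j = {}" unfolding ears_def by auto

lemma e1_eq: "e 1 = A1 \<union> B1"
proof
  show "A1 \<union> B1 \<subseteq> e 1" using B1_sub unfolding A1_def' by auto
  show "e 1 \<subseteq> A1 \<union> B1"
  proof
    fix x assume x: "x \<in> e 1"
    show "x \<in> A1 \<union> B1"
    proof (cases "x \<in> B1")
      case False
      hence "x \<in> \<Union>(e ` ({1..n} - {1}))" using x unfolding ears_def by blast
      then obtain j where j: "j \<in> {1..n}" "j \<noteq> 1" "x \<in> e j" by blast
      show ?thesis
      proof (cases "j = 2")
        case True thus ?thesis using j x unfolding A1_def' by auto
      next
        case False
        hence "e 1 \<inter> e j = {}" using j n_in by (intro dis) auto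
        thus ?thesis using x j by auto
      qed
    qed simp
  qed
qed

lemma en_eq: "e n = An \<union> Bn"
proof
  show "An \<union> Bn \<subseteq> e n" using Bn_sub unfolding An_def' by auto
  show "e n \<subseteq> An \<union> Bn"
  proof
    fix x assume x: "x \<in> e n"
    show "x \<in> An \<union> Bn"
    proof (cases "x \<in> Bn")
      case False
      hence "x \<in> \<Union>(e ` ({1..n} - {n}))" using x unfolding ears_def by blast
      then obtain j where j: "j \<in> {1..n}" "j \<noteq> n" "x \<in> e j" by blast
      show ?thesis
      proof (cases "j = n - 1")
        case True thus ?thesis using j x unfolding An_def' by auto
      next
        case False
        hence "e n \<inter> e j = {}" using j n_in n1 by (intro dis) auto
        thus ?thesis using x j by auto
      qed
    qed simp
  qed
qed

lemma A1_e2: "A1 \<subseteq> e 2" and A1_e1: "A1 \<subseteq> e 1" unfolding A1_def' by auto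
lemma An_en1: "An \<subseteq> e (n - 1)" and An_en: "An \<subseteq> e n" unfolding An_def' by auto

lemma A1_B1: "A1 \<inter> B1 = {}" using B1_dis[of 2] n_in A1_e2 by auto
lemma A1_Bn: "A1 \<inter> Bn = {}" using Bn_dis[of 1] n_in n1 A1_e1 by auto
lemma An_B1: "An \<inter> B1 = {}" using B1_dis[of n] n_in n1 An_en by auto
lemma An_Bn: "An \<inter> Bn = {}"
proof -
  have "Bn \<inter> e (n - 1) = {}" by (rule Bn_dis) (use n1 in auto)
  thus ?thesis using An_en1 by auto
qed
lemma B1_Bn: "B1 \<inter> Bn = {}" using B1_dis[of n] n_in n1 Bn_sub by auto

lemma B1_T: "B1 \<subseteq> T" using B1_sub eT n_in by blast
lemma Bn_T: "Bn \<subseteq> T" using Bn_sub eT n_in by blast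
lemma A1_T: "A1 \<subseteq> T" using A1_e1 eT n_in by blast
lemma An_T: "An \<subseteq> T" using An_en eT n_in by blast
lemma A1_M: "A1 \<subseteq> M" using A1_T A1_B1 A1_Bn by auto
lemma An_M: "An \<subseteq> M" using An_T An_B1 An_Bn by auto

lemma sub_eq: "SB = e ` {2..n-1}" unfolding sub_def ..
lemma sub_H: "SB \<subseteq> HG" unfolding sub_eq Hn by auto
lemma sub_M: "i \<in> {2..n-1} \<Longrightarrow> e i \<subseteq> M"
proof -
  assume i: "i \<in> {2..n-1}"
  hence i1: "i \<in> {1..n}" "i \<noteq> 1" "i \<noteq> n" by auto
  have "e i \<subseteq> T" by (rule eT[OF i1(1)])
  moreover have "B1 \<inter> e i = {}" by (rule B1_dis[OF i1(1,2)])
  moreover have "Bn \<inter> e i = {}" by (rule Bn_dis[OF i1(1,3)])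
  ultimately show ?thesis by blast
qed

lemma claim3: "\<gamma> \<subseteq> T \<Longrightarrow> pmin T p {} \<gamma> = Fr p \<gamma>"
  by (rule claim3_gen[OF fT p01])

lemma X_eq: "A1 \<union> (B1 - b1) \<union> An \<union> (Bn - bn) = (A1 \<union> An) \<union> (R1 \<union> Rn)" by auto

lemma claim2: "pmin T p SB (A1 \<union> An \<union> (R1 \<union> Rn)) = max 0 (pmin T p SB (A1 \<union> An) + Fr p (R1 \<union> Rn) - 1)"
proof (rule claim2_gen[OF fT p01])
  show "feas T p SB Pm" by (rule feas_mono[OF Pm_feas sub_H])
  show "A1 \<union> An \<subseteq> T" using A1_T An_T by auto
  show "R1 \<union> Rn \<subseteq> T" using B1_T Bn_T by auto
  show "(A1 \<union> An) \<inter> (R1 \<union> Rn) = {}" using A1_B1 A1_Bn An_B1 An_Bn by auto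
  show "\<forall>e'\<in>SB. e' \<subseteq> T \<and> e' \<inter> (R1 \<union> Rn) = {}"
  proof
    fix e' assume "e' \<in> SB"
    then obtain i where "i \<in> {2..n-1}" "e' = e i" unfolding sub_eq by blast
    thus "e' \<subseteq> T \<and> e' \<inter> (R1 \<union> Rn) = {}" using sub_M[of i] by blast
  qed
qed

end


context L begin

abbreviation "Xs \<equiv> A1 \<union> An \<union> (R1 \<union> Rn)"

lemma B1_split: "B1 = b1 \<union> R1" using b1 by auto
lemma Bn_split: "Bn = bn \<union> Rn" using bn by auto

lemma c1_lower:
  assumes fe: "feas T p HG Pr"
  shows "Fr p b1 + Fr p bn - (1 - pmin T p SB Xs) \<le> prb T Pr (\<lambda>w. b1 \<union> bn \<subseteq> w)"
proof -
  have i: "interp T p Pr" and d: "pd T Pr" using fe unfolding feas_def interp_pd by auto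
  have z: "prb T Pr (\<lambda>w. (b1 \<subseteq> w \<or> bn \<subseteq> w) \<and> Xs \<subseteq> w) = 0"
  proof (rule prb_zero)
    fix w assume w: "w \<subseteq> T" "(b1 \<subseteq> w \<or> bn \<subseteq> w) \<and> Xs \<subseteq> w"
    show "Pr w = 0"
    proof (cases "b1 \<subseteq> w")
      case True
      hence "B1 \<subseteq> w" "A1 \<subseteq> w" using w by auto
      hence "e 1 \<subseteq> w" using e1_eq by simp
      thus ?thesis using feas_e[OF fe n_in(1) w(1)] by simp
    next
      case False
      hence "bn \<subseteq> w" using w by auto
      hence "Bn \<subseteq> w" "An \<subseteq> w" using w by auto
      hence "e n \<subseteq> w" using en_eq by simp
      thus ?thesis using feas_e[OF fe n_in(2) w(1)] by simp
    qed
  qed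
  have inc: "prb T Pr (\<lambda>w. b1 \<subseteq> w) + prb T Pr (\<lambda>w. bn \<subseteq> w) + prb T Pr (\<lambda>w. Xs \<subseteq> w) - 1
      \<le> prb T Pr (\<lambda>w. b1 \<subseteq> w \<and> bn \<subseteq> w)" by (rule incl[OF fT d z])
  have "prb T Pr (\<lambda>w. b1 \<subseteq> w \<and> bn \<subseteq> w) = prb T Pr (\<lambda>w. b1 \<union> bn \<subseteq> w)" by (rule prb_cong) auto
  moreover have "Fr p b1 \<le> prb T Pr (\<lambda>w. b1 \<subseteq> w)" by (rule frech_lower[OF fT i]) (use b1 B1_T in auto)
  moreover have "Fr p bn \<le> prb T Pr (\<lambda>w. bn \<subseteq> w)" by (rule frech_lower[OF fT i]) (use bn Bn_T in auto)
  moreover have "pmin T p SB Xs \<le> prb T Pr (\<lambda>w. Xs \<subseteq> w)" by (rule pmin_le[OF feas_mono[OF fe sub_H]])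
  ultimately show ?thesis using inc by linarith
qed

lemma A1_An: "3 \<le> n \<Longrightarrow> A1 \<inter> An = {}"
proof -
  assume n3: "3 \<le> n"
  have "e 1 \<inter> e n = {}" using n3 n_in by (intro dis) auto
  thus ?thesis using A1_e1 An_en by auto
qed

lemma ei_A1: "i \<in> {3..n} \<Longrightarrow> e i \<inter> A1 = {}"
proof -
  assume i: "i \<in> {3..n}"
  have "e i \<inter> e 1 = {}" using i n_in by (intro dis) auto
  thus ?thesis using A1_e1 by auto
qed

lemma ei_An: "i \<in> {1..n-2} \<Longrightarrow> e i \<inter> An = {}"
proof -
  assume i: "i \<in> {1..n-2}"
  have "e i \<inter> e n = {}" using i n_in n1 by (intro dis) auto
  thus ?thesis using An_en by auto
qed

lemma step_a:
  assumes ep: "0 < \<epsilon>"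
  obtains Q2 where "interp T p Q2"
    "\<forall>i\<in>{2..n-1}. \<forall>w. w \<subseteq> T \<longrightarrow> e i \<subseteq> w \<longrightarrow> Q2 w = 0"
    "prb T Q2 (\<lambda>w. A1 \<subseteq> w) = Fr p A1" "prb T Q2 (\<lambda>w. An \<subseteq> w) = Fr p An"
    "prb T Q2 (\<lambda>w. A1 \<union> An \<subseteq> w) < pmin T p SB (A1 \<union> An) + \<epsilon>"
proof (cases "n = 2")
  case True
  have iPm: "interp T p Pm" using Pm_feas unfolding feas_def by auto
  have forb: "\<forall>w. w \<subseteq> T \<longrightarrow> A1 \<union> B1 \<subseteq> w \<longrightarrow> Pm w = 0"
  proof (intro allI impI)
    fix w assume w: "w \<subseteq> T" "A1 \<union> B1 \<subseteq> w"
    have "e 1 \<subseteq> w" using w(2) e1_eq by simp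
    thus "Pm w = 0" by (rule feas_e[OF Pm_feas n_in(1) w(1)])
  qed
  have BA: "B1 \<inter> A1 = {}" using A1_B1 by auto
  have eT0: "{} \<subseteq> T" and eA0: "{} \<inter> A1 = {}" by auto
  obtain Q' where Q': "interp T p Q'"
    "\<forall>e'. e' \<subseteq> T \<longrightarrow> e' \<inter> A1 = {} \<longrightarrow> (\<forall>w. w \<subseteq> T \<longrightarrow> e' \<subseteq> w \<longrightarrow> Pm w = 0) \<longrightarrow> (\<forall>w. w \<subseteq> T \<longrightarrow> e' \<subseteq> w \<longrightarrow> Q' w = 0)"
    "\<forall>w. w \<subseteq> T \<longrightarrow> A1 \<union> B1 \<subseteq> w \<longrightarrow> Q' w = 0"
    "prb T Q' (\<lambda>w. A1 \<subseteq> w) = Fr p A1"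
    "prb T Q' (\<lambda>w. A1 \<union> {} \<subseteq> w) \<le> prb T Pm (\<lambda>w. A1 \<union> {} \<subseteq> w)"
    "\<forall>Z. Z \<subseteq> T \<longrightarrow> Z \<inter> A1 = {} \<longrightarrow> prb T Q' (\<lambda>w. Z \<subseteq> w) = prb T Pm (\<lambda>w. Z \<subseteq> w)"
    by (rule RED[OF fT iPm p01 A1_T B1_T BA eT0 eA0 forb])
  have nn: "n - 1 = 1" using True by simp
  have An1: "An = A1" using nn by simp
  have SB0: "SB = {}" unfolding sub_eq using True by auto
  have s: "pmin T p SB (A1 \<union> An) = Fr p A1" unfolding SB0 An1 using claim3[OF A1_T] by simp
  show ?thesis
  proof (rule that[OF Q'(1)])
    show "\<forall>i\<in>{2..n-1}. \<forall>w. w \<subseteq> T \<longrightarrow> e i \<subseteq> w \<longrightarrow> Q' w = 0" using True by auto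
    show "prb T Q' (\<lambda>w. A1 \<subseteq> w) = Fr p A1" by (rule Q'(4))
    show "prb T Q' (\<lambda>w. An \<subseteq> w) = Fr p An" unfolding An1 by (rule Q'(4))
    show "prb T Q' (\<lambda>w. A1 \<union> An \<subseteq> w) < pmin T p SB (A1 \<union> An) + \<epsilon>" using Q'(4) ep s An1 by simp
  qed
next
  case False
  hence n3: "3 \<le> n" using n1 by auto
  have fSB: "feas T p SB Pm" by (rule feas_mono[OF Pm_feas sub_H])
  obtain Q0 where Q0: "feas T p SB Q0" "prb T Q0 (\<lambda>w. A1 \<union> An \<subseteq> w) < pmin T p SB (A1 \<union> An) + \<epsilon>"
    by (rule pmin_approx[OF fSB ep])
  have iQ0: "interp T p Q0" using Q0(1) unfolding feas_def by auto
  have Q0f: "\<forall>w. w \<subseteq> T \<longrightarrow> e i \<subseteq> w \<longrightarrow> Q0 w = 0" if "i \<in> {2..n-1}" for i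
  proof (intro allI impI)
    fix w assume "w \<subseteq> T" "e i \<subseteq> w"
    have "e i \<in> SB" using that unfolding sub_eq by auto
    thus "Q0 w = 0" by (rule feas_D[OF Q0(1) _ \<open>w \<subseteq> T\<close> \<open>e i \<subseteq> w\<close>])
  qed
  have e2eq: "A1 \<union> (e 2 - A1) = e 2" using A1_e2 by auto
  have e2T: "e 2 - A1 \<subseteq> T" using eT[OF n_in(3)] by auto
  have f1: "\<forall>w. w \<subseteq> T \<longrightarrow> A1 \<union> (e 2 - A1) \<subseteq> w \<longrightarrow> Q0 w = 0"
    unfolding e2eq by (rule Q0f) (use n3 in auto)
  have e2A: "(e 2 - A1) \<inter> A1 = {}" by auto
  have AnA1: "An \<inter> A1 = {}" using A1_An[OF n3] by auto
  obtain Q1 where Q1: "interp T p Q1"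
    "\<forall>e'. e' \<subseteq> T \<longrightarrow> e' \<inter> A1 = {} \<longrightarrow> (\<forall>w. w \<subseteq> T \<longrightarrow> e' \<subseteq> w \<longrightarrow> Q0 w = 0) \<longrightarrow> (\<forall>w. w \<subseteq> T \<longrightarrow> e' \<subseteq> w \<longrightarrow> Q1 w = 0)"
    "\<forall>w. w \<subseteq> T \<longrightarrow> A1 \<union> (e 2 - A1) \<subseteq> w \<longrightarrow> Q1 w = 0"
    "prb T Q1 (\<lambda>w. A1 \<subseteq> w) = Fr p A1"
    "prb T Q1 (\<lambda>w. A1 \<union> An \<subseteq> w) \<le> prb T Q0 (\<lambda>w. A1 \<union> An \<subseteq> w)"
    "\<forall>Z. Z \<subseteq> T \<longrightarrow> Z \<inter> A1 = {} \<longrightarrow> prb T Q1 (\<lambda>w. Z \<subseteq> w) = prb T Q0 (\<lambda>w. Z \<subseteq> w)"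
    by (rule RED[OF fT iQ0 p01 A1_T e2T e2A An_T AnA1 f1])
  have Q1f: "\<forall>w. w \<subseteq> T \<longrightarrow> e i \<subseteq> w \<longrightarrow> Q1 w = 0" if "i \<in> {2..n-1}" for i
  proof (cases "i = 2")
    case True thus ?thesis using Q1(3) unfolding e2eq by simp
  next
    case False
    hence "i \<in> {3..n}" using that by auto
    hence "e i \<inter> A1 = {}" by (rule ei_A1)
    moreover have "e i \<subseteq> T" by (rule eT) (use that in auto)
    ultimately show ?thesis using Q1(2)[rule_format, of "e i"] Q0f[OF that] by simp
  qed
  have eneq: "An \<union> (e (n-1) - An) = e (n-1)" using An_en1 by auto
  have enT: "e (n-1) - An \<subseteq> T" using eT[OF n_in(4)] by auto
  have f2: "\<forall>w. w \<subseteq> T \<longrightarrow> An \<union> (e (n-1) - An) \<subseteq> w \<longrightarrow> Q1 w = 0"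
    unfolding eneq by (rule Q1f) (use n3 in auto)
  have enA: "(e (n-1) - An) \<inter> An = {}" by auto
  have A1An: "A1 \<inter> An = {}" using AnA1 by auto
  obtain Q2 where Q2: "interp T p Q2"
    "\<forall>e'. e' \<subseteq> T \<longrightarrow> e' \<inter> An = {} \<longrightarrow> (\<forall>w. w \<subseteq> T \<longrightarrow> e' \<subseteq> w \<longrightarrow> Q1 w = 0) \<longrightarrow> (\<forall>w. w \<subseteq> T \<longrightarrow> e' \<subseteq> w \<longrightarrow> Q2 w = 0)"
    "\<forall>w. w \<subseteq> T \<longrightarrow> An \<union> (e (n-1) - An) \<subseteq> w \<longrightarrow> Q2 w = 0"
    "prb T Q2 (\<lambda>w. An \<subseteq> w) = Fr p An"
    "prb T Q2 (\<lambda>w. An \<union> A1 \<subseteq> w) \<le> prb T Q1 (\<lambda>w. An \<union> A1 \<subseteq> w)"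
    "\<forall>Z. Z \<subseteq> T \<longrightarrow> Z \<inter> An = {} \<longrightarrow> prb T Q2 (\<lambda>w. Z \<subseteq> w) = prb T Q1 (\<lambda>w. Z \<subseteq> w)"
    by (rule RED[OF fT Q1(1) p01 An_T enT enA A1_T A1An f2])
  show ?thesis
  proof (rule that[OF Q2(1)])
    show "\<forall>i\<in>{2..n-1}. \<forall>w. w \<subseteq> T \<longrightarrow> e i \<subseteq> w \<longrightarrow> Q2 w = 0"
    proof
      fix i assume i: "i \<in> {2..n-1}"
      show "\<forall>w. w \<subseteq> T \<longrightarrow> e i \<subseteq> w \<longrightarrow> Q2 w = 0"
      proof (cases "i = n - 1")
        case True thus ?thesis using Q2(3) unfolding eneq by simp
      next
        case False
        hence "i \<in> {1..n-2}" using i by auto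
        hence "e i \<inter> An = {}" by (rule ei_An)
        moreover have "e i \<subseteq> T" by (rule eT) (use i in auto)
        ultimately show ?thesis using Q2(2)[rule_format, of "e i"] Q1f[OF i] by simp
      qed
    qed
    show "prb T Q2 (\<lambda>w. A1 \<subseteq> w) = Fr p A1" using Q2(6)[rule_format, OF A1_T A1An] Q1(4) by simp
    show "prb T Q2 (\<lambda>w. An \<subseteq> w) = Fr p An" by (rule Q2(4))
    have "prb T Q2 (\<lambda>w. A1 \<union> An \<subseteq> w) \<le> prb T Q0 (\<lambda>w. A1 \<union> An \<subseteq> w)"
      using Q2(5) Q1(5) by (simp add: Un_commute)
    thus "prb T Q2 (\<lambda>w. A1 \<union> An \<subseteq> w) < pmin T p SB (A1 \<union> An) + \<epsilon>" using Q0(2) by linarith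
  qed
qed

end


lemma arith_final:
  fixes v g1 gn f1 fn y s FR \<epsilon> w2 z a m0e m0f fin :: real
  assumes w2: "w2 \<le> max 0 (gn - (1 - v))"
    and z: "z \<le> max 0 (gn - (1 - max 0 (g1 - (1 - y))))"
    and m0e: "w2 - z \<le> m0e" and a: "a \<le> max 0 (f1 - m0e)"
    and m0f: "m0f = 1 - w2 - a" and fin: "fin \<le> max 0 (fn - m0f)"
    and y: "y < s + \<epsilon>" and FR: "g1 + gn - 1 \<le> FR" "0 \<le> FR" and gn1: "gn \<le> 1"
    and c2: "max 0 (gn - (1 - v)) \<le> 1 - fn" and ep: "0 < \<epsilon>"
  shows "fin \<le> max 0 (f1 + fn - (1 - max 0 (s + FR - 1))) + \<epsilon>"
proof -
  define S where "S = max 0 (s + FR - 1)"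
  have h1: "z \<le> max 0 (y + FR - 1)"
  proof -
    have "max 0 (gn - (1 - max 0 (g1 - (1 - y)))) \<le> max 0 (y + FR - 1)"
    proof (cases "g1 - (1 - y) \<ge> 0")
      case True
      hence "max 0 (g1 - (1 - y)) = g1 - (1 - y)" by simp
      thus ?thesis using FR by (simp add: max_def)
    next
      case False
      hence "max 0 (g1 - (1 - y)) = 0" by simp
      thus ?thesis using gn1 by (simp add: max_def)
    qed
    thus ?thesis using z by linarith
  qed
  have h2: "max 0 (y + FR - 1) \<le> S + \<epsilon>" unfolding S_def using y ep by (simp add: max_def)
  have zS: "z \<le> S + \<epsilon>" using h1 h2 by linarith
  have S0: "0 \<le> S" unfolding S_def by simp
  have w2f: "w2 \<le> 1 - fn" using w2 c2 by linarith
  have a2: "a \<le> max 0 (f1 - w2 + S + \<epsilon>)"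
  proof -
    have "f1 - m0e \<le> f1 - w2 + S + \<epsilon>" using m0e zS by linarith
    hence "max 0 (f1 - m0e) \<le> max 0 (f1 - w2 + S + \<epsilon>)" by (intro max.mono) auto
    thus ?thesis using a by linarith
  qed
  have "fn - m0f = fn - 1 + w2 + a" using m0f by simp
  hence "fin \<le> max 0 (fn - 1 + w2 + a)" using fin by simp
  also have "\<dots> \<le> max 0 (f1 + fn - 1 + S) + \<epsilon>"
  proof (cases "f1 - w2 + S + \<epsilon> \<ge> 0")
    case True
    hence "a \<le> f1 - w2 + S + \<epsilon>" using a2 by simp
    hence "fn - 1 + w2 + a \<le> f1 + fn - 1 + S + \<epsilon>" by linarith
    thus ?thesis using ep by (simp add: max_def)
  next
    case False
    hence "a \<le> 0" using a2 by simp
    hence "fn - 1 + w2 + a \<le> 0" using w2f by linarith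
    thus ?thesis using ep by (simp add: max_def)
  qed
  finally show ?thesis unfolding S_def by simp
qed

lemma cond_arith:
  fixes u FB f1 g1 :: real
  assumes "u + FB \<le> 1" "f1 + g1 - 1 \<le> FB" "f1 \<le> 1" "0 \<le> u"
  shows "max 0 (g1 - (1 - u)) \<le> 1 - f1"
  using assms by (simp add: max_def)


context L begin

lemma p01s: "Z \<subseteq> T \<Longrightarrow> \<forall>t\<in>Z. 0 \<le> p t \<and> p t \<le> 1" using p01 by auto

lemma Fr01: "Z \<subseteq> T \<Longrightarrow> 0 \<le> Fr p Z \<and> Fr p Z \<le> 1"
  using Fr_bounds[of Z p] p01 by auto

lemma model_cond1: "Fr p A1 + Fr p B1 \<le> 1"
proof -
  have i: "interp T p Pm" and d: "pd T Pm" using Pm_feas unfolding feas_def interp_pd by auto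
  have z: "prb T Pm (\<lambda>w. A1 \<subseteq> w \<and> B1 \<subseteq> w) = 0"
  proof (rule prb_zero)
    fix w assume w: "w \<subseteq> T" "A1 \<subseteq> w \<and> B1 \<subseteq> w"
    hence "e 1 \<subseteq> w" using e1_eq by simp
    thus "Pm w = 0" by (rule feas_e[OF Pm_feas n_in(1) w(1)])
  qed
  have "prb T Pm (\<lambda>w. A1 \<subseteq> w) + prb T Pm (\<lambda>w. B1 \<subseteq> w) - 1 \<le> prb T Pm (\<lambda>w. A1 \<subseteq> w \<and> B1 \<subseteq> w)"
    by (rule prb_and_ge[OF fT d])
  moreover have "Fr p A1 \<le> prb T Pm (\<lambda>w. A1 \<subseteq> w)" by (rule frech_lower[OF fT i A1_T])
  moreover have "Fr p B1 \<le> prb T Pm (\<lambda>w. B1 \<subseteq> w)" by (rule frech_lower[OF fT i B1_T])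
  ultimately show ?thesis using z by linarith
qed

lemma model_condn: "Fr p An + Fr p Bn \<le> 1"
proof -
  have i: "interp T p Pm" and d: "pd T Pm" using Pm_feas unfolding feas_def interp_pd by auto
  have z: "prb T Pm (\<lambda>w. An \<subseteq> w \<and> Bn \<subseteq> w) = 0"
  proof (rule prb_zero)
    fix w assume w: "w \<subseteq> T" "An \<subseteq> w \<and> Bn \<subseteq> w"
    hence "e n \<subseteq> w" using en_eq by simp
    thus "Pm w = 0" by (rule feas_e[OF Pm_feas n_in(2) w(1)])
  qed
  have "prb T Pm (\<lambda>w. An \<subseteq> w) + prb T Pm (\<lambda>w. Bn \<subseteq> w) - 1 \<le> prb T Pm (\<lambda>w. An \<subseteq> w \<and> Bn \<subseteq> w)"
    by (rule prb_and_ge[OF fT d])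
  moreover have "Fr p An \<le> prb T Pm (\<lambda>w. An \<subseteq> w)" by (rule frech_lower[OF fT i An_T])
  moreover have "Fr p Bn \<le> prb T Pm (\<lambda>w. Bn \<subseteq> w)" by (rule frech_lower[OF fT i Bn_T])
  ultimately show ?thesis using z by linarith
qed

lemma FB1: "Fr p b1 + Fr p R1 - 1 \<le> Fr p B1"
proof -
  have "finite b1" "finite R1" using b1 B1_T fT by (auto intro: finite_subset)
  hence "Fr p b1 + Fr p R1 - 1 \<le> Fr p (b1 \<union> R1)" using p01 b1 B1_T by (intro Fr_Un_ge) auto
  moreover have "b1 \<union> R1 = B1" using b1 by auto
  ultimately show ?thesis by simp
qed

lemma FBn: "Fr p bn + Fr p Rn - 1 \<le> Fr p Bn"
proof -
  have "finite bn" "finite Rn" using bn Bn_T fT by (auto intro: finite_subset)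
  hence "Fr p bn + Fr p Rn - 1 \<le> Fr p (bn \<union> Rn)" using p01 bn Bn_T by (intro Fr_Un_ge) auto
  moreover have "bn \<union> Rn = Bn" using bn by auto
  ultimately show ?thesis by simp
qed

lemma FRR: "Fr p R1 + Fr p Rn - 1 \<le> Fr p (R1 \<union> Rn)"
proof -
  have "finite R1" "finite Rn" using B1_T Bn_T fT by (auto intro: finite_subset)
  thus ?thesis using p01 B1_T Bn_T B1_Bn by (intro Fr_Un_ge) auto
qed

end


context L begin

lemma c1_upper:
  assumes ep: "0 < \<epsilon>"
  shows "pmin T p HG (b1 \<union> bn) \<le> max 0 (Fr p b1 + Fr p bn - (1 - max 0 (pmin T p SB (A1 \<union> An) + Fr p (R1 \<union> Rn) - 1))) + \<epsilon>"
proof -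
  obtain Q2 where Q2: "interp T p Q2"
    "\<forall>i\<in>{2..n-1}. \<forall>w. w \<subseteq> T \<longrightarrow> e i \<subseteq> w \<longrightarrow> Q2 w = 0"
    "prb T Q2 (\<lambda>w. A1 \<subseteq> w) = Fr p A1" "prb T Q2 (\<lambda>w. An \<subseteq> w) = Fr p An"
    "prb T Q2 (\<lambda>w. A1 \<union> An \<subseteq> w) < pmin T p SB (A1 \<union> An) + \<epsilon>"
    by (rule step_a[OF ep])
  let ?s = "pmin T p SB (A1 \<union> An)"
  define u where "u = Fr p A1"
  define v where "v = Fr p An"
  define g1 where "g1 = Fr p R1"
  define gn where "gn = Fr p Rn"
  define f1 where "f1 = Fr p b1"
  define fn where "fn = Fr p bn"
  define Ms where "Ms = T - B1 - Bn"
  define N1 where "N1 = Ms \<union> R1"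
  define N2 where "N2 = N1 \<union> Rn"
  define N3 where "N3 = N2 \<union> b1"
  have MT: "Ms \<subseteq> T" unfolding Ms_def by auto
  have R1T: "R1 \<subseteq> T" and RnT: "Rn \<subseteq> T" using B1_T Bn_T by auto
  have b1T: "b1 \<subseteq> T" and bnT: "bn \<subseteq> T" using b1 bn B1_T Bn_T by auto
  have fM: "finite Ms" and fR1: "finite R1" and fRn: "finite Rn" and fb1: "finite b1" and fbn: "finite bn"
    using MT R1T RnT b1T bnT fT by (auto intro: finite_subset)
  have fN1: "finite N1" and fN2: "finite N2" and fN3: "finite N3"
    unfolding N1_def N2_def N3_def using fM fR1 fRn fb1 by auto
  have A1M: "A1 \<subseteq> Ms" and AnM: "An \<subseteq> Ms" using A1_M An_M unfolding Ms_def by auto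
  have djc: "Ms \<inter> R1 = {}" unfolding Ms_def by auto
  have djd: "N1 \<inter> Rn = {}" unfolding N1_def Ms_def using B1_Bn by auto
  have dje: "N2 \<inter> b1 = {}" unfolding N2_def N1_def Ms_def using B1_Bn b1 by auto
  have djf: "N3 \<inter> bn = {}" unfolding N3_def N2_def N1_def Ms_def using B1_Bn b1 bn by auto
  have TN: "N3 \<union> bn = T" unfolding N3_def N2_def N1_def Ms_def using B1_T Bn_T b1 bn by auto
  have dQ2: "pd T Q2" using Q2(1) unfolding interp_pd by auto
  obtain QM where QM: "pd Ms QM" "\<forall>R. prb Ms QM R = prb T Q2 (\<lambda>w. R (w \<inter> Ms))"
      "\<forall>w'. w' \<subseteq> Ms \<longrightarrow> QM w' = prb T Q2 (\<lambda>w. w \<inter> Ms = w')"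
    using marg_exists[OF fT dQ2 MT] by auto
  have iM: "interp Ms p QM" by (rule marg_interp[OF Q2(1) QM(2) QM(1) MT])
  have trM: "prb Ms QM (\<lambda>w. Z \<subseteq> w) = prb T Q2 (\<lambda>w. Z \<subseteq> w)" if "Z \<subseteq> Ms" for Z
  proof -
    have "prb Ms QM (\<lambda>w. Z \<subseteq> w) = prb T Q2 (\<lambda>w. Z \<subseteq> w \<inter> Ms)" using QM(2) by simp
    also have "\<dots> = prb T Q2 (\<lambda>w. Z \<subseteq> w)" by (rule prb_cong) (use that in auto)
    finally show ?thesis .
  qed
  have forbM: "\<forall>w. w \<subseteq> Ms \<longrightarrow> e i \<subseteq> w \<longrightarrow> QM w = 0" if i: "i \<in> {2..n-1}" for i
  proof -
    have eM: "e i \<subseteq> Ms" using sub_M[OF i] unfolding Ms_def .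
    have "\<forall>w. w \<subseteq> T \<longrightarrow> e i \<subseteq> w \<longrightarrow> Q2 w = 0" using Q2(2) i by blast
    thus ?thesis by (rule marg_forbid[OF QM(3) eM])
  qed
  have uM: "prb Ms QM (\<lambda>w. A1 \<subseteq> w) = u" using trM[OF A1M] Q2(3) unfolding u_def by simp
  have vM: "prb Ms QM (\<lambda>w. An \<subseteq> w) = v" using trM[OF AnM] Q2(4) unfolding v_def by simp
  define y where "y = prb Ms QM (\<lambda>w. A1 \<union> An \<subseteq> w)"
  have yeq: "y = prb T Q2 (\<lambda>w. A1 \<union> An \<subseteq> w)" unfolding y_def by (rule trM) (use A1M AnM in auto)
  have yM: "y < ?s + \<epsilon>" using yeq Q2(5) by linarith
  have dM: "pd Ms QM" by (rule QM(1))
  obtain QR1 where QR1: "interp R1 p QR1" "prb R1 QR1 (\<lambda>w. R1 \<subseteq> w) = g1"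
    using frech_exists[OF fR1 p01s[OF R1T]] unfolding g1_def by blast
  obtain QRn where QRn: "interp Rn p QRn" "prb Rn QRn (\<lambda>w. Rn \<subseteq> w) = gn"
    using frech_exists[OF fRn p01s[OF RnT]] unfolding gn_def by blast
  obtain Qb1 where Qb1: "interp b1 p Qb1" "prb b1 Qb1 (\<lambda>w. b1 \<subseteq> w) = f1"
    using frech_exists[OF fb1 p01s[OF b1T]] unfolding f1_def by blast
  obtain Qbn where Qbn: "interp bn p Qbn" "prb bn Qbn (\<lambda>w. bn \<subseteq> w) = fn"
    using frech_exists[OF fbn p01s[OF bnT]] unfolding fn_def by blast
  have dR1: "pd R1 QR1" and dRn: "pd Rn QRn" and db1: "pd b1 Qb1" and dbn: "pd bn Qbn"
    using QR1 QRn Qb1 Qbn unfolding interp_pd by auto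
  have g1b: "0 \<le> g1" "g1 \<le> 1" using Fr01[OF R1T] unfolding g1_def by auto
  have gnb: "0 \<le> gn" "gn \<le> 1" using Fr01[OF RnT] unfolding gn_def by auto
  have f1b: "0 \<le> f1" "f1 \<le> 1" using Fr01[OF b1T] unfolding f1_def by auto
  have fnb: "0 \<le> fn" "fn \<le> 1" using Fr01[OF bnT] unfolding fn_def by auto
  have ub: "0 \<le> u" using Fr01[OF A1_T] unfolding u_def by auto
  have vb: "0 \<le> v" using Fr01[OF An_T] unfolding v_def by auto
  define cc :: "'a set \<Rightarrow> nat" where "cc = (\<lambda>w. if \<not> A1 \<subseteq> w then 0 else if \<not> An \<subseteq> w then 1 else 2)"
  have cc3: "\<And>w. cc w < 3" unfolding cc_def by simp
  obtain P1 where P1: "pd (Ms \<union> R1) P1"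
     "\<forall>R. prb (Ms \<union> R1) P1 (\<lambda>w. R (w \<inter> Ms)) = prb Ms QM R"
     "\<forall>R. prb (Ms \<union> R1) P1 (\<lambda>w. R (w \<inter> R1)) = prb R1 QR1 R"
     "\<forall>k<3. prb (Ms \<union> R1) P1 (\<lambda>w. cc (w \<inter> Ms) = k \<and> R1 \<subseteq> w \<inter> R1) =
        fill (prb R1 QR1 (\<lambda>w. R1 \<subseteq> w)) (prb Ms QM (\<lambda>w. cc w = 0)) (prb Ms QM (\<lambda>w. cc w = 1)) k"
     "\<forall>w. QM (w \<inter> Ms) = 0 \<longrightarrow> P1 w = 0"
     "\<forall>w. QR1 (w \<inter> R1) = 0 \<longrightarrow> P1 w = 0"
     "prb R1 QR1 (\<lambda>w. R1 \<subseteq> w) \<le> prb Ms QM (\<lambda>w. cc w = 0) + prb Ms QM (\<lambda>w. cc w = 1) \<longrightarrow>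
        (\<forall>w. cc (w \<inter> Ms) = 2 \<longrightarrow> R1 \<subseteq> w \<inter> R1 \<longrightarrow> P1 w = 0)"
    by (rule G3[OF fM fR1 djc dM dR1 cc3, where E="\<lambda>w. R1 \<subseteq> w"])
  note P1 = P1[folded N1_def]
  have iP1: "interp N1 p P1" unfolding N1_def by (rule interp_Un[OF P1(1-3)[unfolded N1_def] iM QR1(1)])
  have dP1: "pd N1 P1" using iP1 unfolding interp_pd by auto
  let ?mc0 = "prb Ms QM (\<lambda>w. cc w = 0)" and ?mc1 = "prb Ms QM (\<lambda>w. cc w = 1)"
  have mc0: "?mc0 = 1 - u"
  proof -
    have "?mc0 = prb Ms QM (\<lambda>w. \<not> A1 \<subseteq> w)" unfolding cc_def by (rule prb_cong) auto
    thus ?thesis using prb_compl[OF fM dM, of "\<lambda>w. A1 \<subseteq> w"] uM by simp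
  qed
  have mc01: "?mc0 + ?mc1 = 1 - y"
  proof -
    have "prb Ms QM (\<lambda>w. cc w = 2) = y" unfolding y_def cc_def by (rule prb_cong) auto
    thus ?thesis using prb_three[where c=cc, OF fM dM cc3] by linarith
  qed
  have mcnn: "0 \<le> prb Ms QM R" for R by (rule prb_nonneg[OF dM])
  have F1a: "prb N1 P1 (\<lambda>w. A1 \<union> R1 \<subseteq> w) \<le> max 0 (g1 - (1 - u))"
  proof -
    have "prb N1 P1 (\<lambda>w. A1 \<union> R1 \<subseteq> w) \<le> prb N1 P1 (\<lambda>w. cc (w \<inter> Ms) = 1 \<and> R1 \<subseteq> w \<inter> R1) + prb N1 P1 (\<lambda>w. cc (w \<inter> Ms) = 2 \<and> R1 \<subseteq> w \<inter> R1)"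
      by (rule two_class[OF fN1 dP1]) (use A1M in \<open>auto simp: cc_def\<close>)
    also have "\<dots> = fill g1 ?mc0 ?mc1 1 + fill g1 ?mc0 ?mc1 2" using P1(4) QR1(2) by simp
    also have "\<dots> = max 0 (g1 - ?mc0)" by (rule fill12[OF g1b(1) mcnn mcnn])
    finally show ?thesis unfolding mc0 .
  qed
  have F1b: "prb N1 P1 (\<lambda>w. A1 \<union> An \<union> R1 \<subseteq> w) = max 0 (g1 - (1 - y))"
  proof -
    have "prb N1 P1 (\<lambda>w. A1 \<union> An \<union> R1 \<subseteq> w) = prb N1 P1 (\<lambda>w. cc (w \<inter> Ms) = 2 \<and> R1 \<subseteq> w \<inter> R1)"
      by (rule prb_cong) (use A1M AnM in \<open>auto simp: cc_def N1_def\<close>)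
    also have "\<dots> = fill g1 ?mc0 ?mc1 2" using P1(4) QR1(2) by simp
    also have "\<dots> = max 0 (g1 - ?mc0 - ?mc1)" by (rule fill2_eq[OF g1b(1) mcnn mcnn])
    finally show ?thesis using mc01 by (simp add: algebra_simps)
  qed
  have vP1: "prb N1 P1 (\<lambda>w. An \<subseteq> w) = v"
    using marg_tr[OF P1(2), of "\<lambda>w. An \<subseteq> w" "\<lambda>w. An \<subseteq> w"] AnM vM by auto
  define cd :: "'a set \<Rightarrow> nat" where "cd = (\<lambda>w. if \<not> An \<subseteq> w then 0 else if \<not> A1 \<union> R1 \<subseteq> w then 1 else 2)"
  have cd3: "\<And>w. cd w < 3" unfolding cd_def by simp
  obtain P2 where P2: "pd (N1 \<union> Rn) P2"
     "\<forall>R. prb (N1 \<union> Rn) P2 (\<lambda>w. R (w \<inter> N1)) = prb N1 P1 R"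
     "\<forall>R. prb (N1 \<union> Rn) P2 (\<lambda>w. R (w \<inter> Rn)) = prb Rn QRn R"
     "\<forall>k<3. prb (N1 \<union> Rn) P2 (\<lambda>w. cd (w \<inter> N1) = k \<and> Rn \<subseteq> w \<inter> Rn) =
        fill (prb Rn QRn (\<lambda>w. Rn \<subseteq> w)) (prb N1 P1 (\<lambda>w. cd w = 0)) (prb N1 P1 (\<lambda>w. cd w = 1)) k"
     "\<forall>w. P1 (w \<inter> N1) = 0 \<longrightarrow> P2 w = 0"
     "\<forall>w. QRn (w \<inter> Rn) = 0 \<longrightarrow> P2 w = 0"
     "prb Rn QRn (\<lambda>w. Rn \<subseteq> w) \<le> prb N1 P1 (\<lambda>w. cd w = 0) + prb N1 P1 (\<lambda>w. cd w = 1) \<longrightarrow>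
        (\<forall>w. cd (w \<inter> N1) = 2 \<longrightarrow> Rn \<subseteq> w \<inter> Rn \<longrightarrow> P2 w = 0)"
    by (rule G3[OF fN1 fRn djd dP1 dRn cd3, where E="\<lambda>w. Rn \<subseteq> w"])
  note P2 = P2[folded N2_def]
  have iP2: "interp N2 p P2" unfolding N2_def by (rule interp_Un[OF P2(1-3)[unfolded N2_def] iP1 QRn(1)])
  have dP2: "pd N2 P2" using iP2 unfolding interp_pd by auto
  let ?md0 = "prb N1 P1 (\<lambda>w. cd w = 0)" and ?md1 = "prb N1 P1 (\<lambda>w. cd w = 1)"
  have mdnn: "0 \<le> prb N1 P1 R" for R by (rule prb_nonneg[OF dP1])
  have md0: "?md0 = 1 - v"
  proof -
    have "?md0 = prb N1 P1 (\<lambda>w. \<not> An \<subseteq> w)" unfolding cd_def by (rule prb_cong) auto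
    thus ?thesis using prb_compl[OF fN1 dP1, of "\<lambda>w. An \<subseteq> w"] vP1 by simp
  qed
  have md01: "?md0 + ?md1 = 1 - max 0 (g1 - (1 - y))"
  proof -
    have "prb N1 P1 (\<lambda>w. cd w = 2) = prb N1 P1 (\<lambda>w. A1 \<union> An \<union> R1 \<subseteq> w)" unfolding cd_def by (rule prb_cong) auto
    thus ?thesis using prb_three[where c=cd, OF fN1 dP1 cd3] F1b by linarith
  qed
  have F2a: "prb N2 P2 (\<lambda>w. An \<union> Rn \<subseteq> w) \<le> max 0 (gn - (1 - v))"
  proof -
    have "prb N2 P2 (\<lambda>w. An \<union> Rn \<subseteq> w) \<le> prb N2 P2 (\<lambda>w. cd (w \<inter> N1) = 1 \<and> Rn \<subseteq> w \<inter> Rn) + prb N2 P2 (\<lambda>w. cd (w \<inter> N1) = 2 \<and> Rn \<subseteq> w \<inter> Rn)"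
      by (rule two_class[OF fN2 dP2]) (use AnM in \<open>auto simp: cd_def N1_def\<close>)
    also have "\<dots> = fill gn ?md0 ?md1 1 + fill gn ?md0 ?md1 2" using P2(4) QRn(2) by simp
    also have "\<dots> = max 0 (gn - ?md0)" by (rule fill12[OF gnb(1) mdnn mdnn])
    finally show ?thesis unfolding md0 .
  qed
  have A1R1N1: "A1 \<union> R1 \<subseteq> N1" using A1M unfolding N1_def by auto
  have F2b: "prb N2 P2 (\<lambda>w. A1 \<union> R1 \<subseteq> w) = prb N1 P1 (\<lambda>w. A1 \<union> R1 \<subseteq> w)"
    by (rule marg_tr[OF P2(2)]) (use A1R1N1 in auto)
  define z where "z = prb N2 P2 (\<lambda>w. A1 \<union> R1 \<union> (An \<union> Rn) \<subseteq> w)"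
  have F2c: "z = max 0 (gn - (1 - max 0 (g1 - (1 - y))))"
  proof -
    have "z = prb N2 P2 (\<lambda>w. cd (w \<inter> N1) = 2 \<and> Rn \<subseteq> w \<inter> Rn)" unfolding z_def
      by (rule prb_cong) (use A1M AnM in \<open>auto simp: cd_def N1_def N2_def\<close>)
    also have "\<dots> = fill gn ?md0 ?md1 2" using P2(4) QRn(2) by simp
    also have "\<dots> = max 0 (gn - ?md0 - ?md1)" by (rule fill2_eq[OF gnb(1) mdnn mdnn])
    finally show ?thesis using md01 by (simp add: algebra_simps)
  qed
  define w1 where "w1 = prb N2 P2 (\<lambda>w. A1 \<union> R1 \<subseteq> w)"
  define w2 where "w2 = prb N2 P2 (\<lambda>w. An \<union> Rn \<subseteq> w)"
  have cond1: "max 0 (g1 - (1 - u)) \<le> 1 - f1"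
    by (rule cond_arith[OF model_cond1[folded u_def] FB1[folded f1_def g1_def] f1b(2) ub])
  have condn: "max 0 (gn - (1 - v)) \<le> 1 - fn"
    by (rule cond_arith[OF model_condn[folded v_def] FBn[folded fn_def gn_def] fnb(2) vb])
  have w1b: "w1 \<le> 1 - f1" using F2b F1a cond1 unfolding w1_def by linarith
  have w2b: "w2 \<le> max 0 (gn - (1 - v))" using F2a unfolding w2_def .
  define ce :: "'a set \<Rightarrow> nat" where "ce = (\<lambda>w. if A1 \<union> R1 \<subseteq> w then 2 else if An \<union> Rn \<subseteq> w then 0 else 1)"
  have ce3: "\<And>w. ce w < 3" unfolding ce_def by simp
  obtain P3 where P3: "pd (N2 \<union> b1) P3"
     "\<forall>R. prb (N2 \<union> b1) P3 (\<lambda>w. R (w \<inter> N2)) = prb N2 P2 R"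
     "\<forall>R. prb (N2 \<union> b1) P3 (\<lambda>w. R (w \<inter> b1)) = prb b1 Qb1 R"
     "\<forall>k<3. prb (N2 \<union> b1) P3 (\<lambda>w. ce (w \<inter> N2) = k \<and> b1 \<subseteq> w \<inter> b1) =
        fill (prb b1 Qb1 (\<lambda>w. b1 \<subseteq> w)) (prb N2 P2 (\<lambda>w. ce w = 0)) (prb N2 P2 (\<lambda>w. ce w = 1)) k"
     "\<forall>w. P2 (w \<inter> N2) = 0 \<longrightarrow> P3 w = 0"
     "\<forall>w. Qb1 (w \<inter> b1) = 0 \<longrightarrow> P3 w = 0"
     "prb b1 Qb1 (\<lambda>w. b1 \<subseteq> w) \<le> prb N2 P2 (\<lambda>w. ce w = 0) + prb N2 P2 (\<lambda>w. ce w = 1) \<longrightarrow>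
        (\<forall>w. ce (w \<inter> N2) = 2 \<longrightarrow> b1 \<subseteq> w \<inter> b1 \<longrightarrow> P3 w = 0)"
    by (rule G3[OF fN2 fb1 dje dP2 db1 ce3, where E="\<lambda>w. b1 \<subseteq> w"])
  note P3 = P3[folded N3_def]
  have iP3: "interp N3 p P3" unfolding N3_def by (rule interp_Un[OF P3(1-3)[unfolded N3_def] iP2 Qb1(1)])
  have dP3: "pd N3 P3" using iP3 unfolding interp_pd by auto
  let ?me0 = "prb N2 P2 (\<lambda>w. ce w = 0)" and ?me1 = "prb N2 P2 (\<lambda>w. ce w = 1)"
  have menn: "0 \<le> prb N2 P2 R" for R by (rule prb_nonneg[OF dP2])
  have me01: "?me0 + ?me1 = 1 - w1"
  proof -
    have "prb N2 P2 (\<lambda>w. ce w = 2) = w1" unfolding w1_def ce_def by (rule prb_cong) auto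
    thus ?thesis using prb_three[where c=ce, OF fN2 dP2 ce3] by linarith
  qed
  have me0: "w2 - z \<le> ?me0"
  proof -
    have "w2 = prb N2 P2 (\<lambda>w. An \<union> Rn \<subseteq> w \<and> A1 \<union> R1 \<subseteq> w) + prb N2 P2 (\<lambda>w. An \<union> Rn \<subseteq> w \<and> \<not> A1 \<union> R1 \<subseteq> w)"
      unfolding w2_def by (rule prb_split[OF fN2])
    moreover have "prb N2 P2 (\<lambda>w. An \<union> Rn \<subseteq> w \<and> A1 \<union> R1 \<subseteq> w) = z" unfolding z_def by (rule prb_cong) auto
    moreover have "prb N2 P2 (\<lambda>w. An \<union> Rn \<subseteq> w \<and> \<not> A1 \<union> R1 \<subseteq> w) = ?me0" unfolding ce_def by (rule prb_cong) auto
    ultimately show ?thesis by linarith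
  qed
  have zero_e: "\<forall>w. ce (w \<inter> N2) = 2 \<longrightarrow> b1 \<subseteq> w \<inter> b1 \<longrightarrow> P3 w = 0"
  proof -
    have "prb b1 Qb1 (\<lambda>w. b1 \<subseteq> w) \<le> ?me0 + ?me1" using Qb1(2) me01 w1b by linarith
    thus ?thesis by (rule mp[OF P3(7)])
  qed
  define a where "a = prb N3 P3 (\<lambda>w. b1 \<subseteq> w \<and> \<not> An \<union> Rn \<subseteq> w)"
  have AnRnN2: "An \<union> Rn \<subseteq> N2" using AnM unfolding N2_def N1_def by auto
  have F3a: "a \<le> max 0 (f1 - ?me0)"
  proof -
    have "a \<le> prb N3 P3 (\<lambda>w. ce (w \<inter> N2) = 1 \<and> b1 \<subseteq> w \<inter> b1) + prb N3 P3 (\<lambda>w. ce (w \<inter> N2) = 2 \<and> b1 \<subseteq> w \<inter> b1)"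
      unfolding a_def by (rule two_class[OF fN3 dP3]) (use AnRnN2 in \<open>auto simp: ce_def\<close>)
    also have "\<dots> = fill f1 ?me0 ?me1 1 + fill f1 ?me0 ?me1 2" using P3(4) Qb1(2) by simp
    also have "\<dots> = max 0 (f1 - ?me0)" by (rule fill12[OF f1b(1) menn menn])
    finally show ?thesis .
  qed
  have w2P3: "prb N3 P3 (\<lambda>w. An \<union> Rn \<subseteq> w) = w2"
    unfolding w2_def by (rule marg_tr[OF P3(2)]) (use AnRnN2 in auto)
  define cf :: "'a set \<Rightarrow> nat" where "cf = (\<lambda>w. if An \<union> Rn \<subseteq> w then 2 else if b1 \<subseteq> w then 1 else 0)"
  have cf3: "\<And>w. cf w < 3" unfolding cf_def by simp
  obtain P4 where P4: "pd (N3 \<union> bn) P4"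
     "\<forall>R. prb (N3 \<union> bn) P4 (\<lambda>w. R (w \<inter> N3)) = prb N3 P3 R"
     "\<forall>R. prb (N3 \<union> bn) P4 (\<lambda>w. R (w \<inter> bn)) = prb bn Qbn R"
     "\<forall>k<3. prb (N3 \<union> bn) P4 (\<lambda>w. cf (w \<inter> N3) = k \<and> bn \<subseteq> w \<inter> bn) =
        fill (prb bn Qbn (\<lambda>w. bn \<subseteq> w)) (prb N3 P3 (\<lambda>w. cf w = 0)) (prb N3 P3 (\<lambda>w. cf w = 1)) k"
     "\<forall>w. P3 (w \<inter> N3) = 0 \<longrightarrow> P4 w = 0"
     "\<forall>w. Qbn (w \<inter> bn) = 0 \<longrightarrow> P4 w = 0"
     "prb bn Qbn (\<lambda>w. bn \<subseteq> w) \<le> prb N3 P3 (\<lambda>w. cf w = 0) + prb N3 P3 (\<lambda>w. cf w = 1) \<longrightarrow>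
        (\<forall>w. cf (w \<inter> N3) = 2 \<longrightarrow> bn \<subseteq> w \<inter> bn \<longrightarrow> P4 w = 0)"
    by (rule G3[OF fN3 fbn djf dP3 dbn cf3, where E="\<lambda>w. bn \<subseteq> w"])
  note P4 = P4[unfolded TN]
  have iP4: "interp T p P4" using interp_Un[OF P4(1-3)[folded TN] iP3 Qbn(1)] TN by simp
  have dP4: "pd T P4" using iP4 unfolding interp_pd by auto
  let ?mf0 = "prb N3 P3 (\<lambda>w. cf w = 0)" and ?mf1 = "prb N3 P3 (\<lambda>w. cf w = 1)"
  have mfnn: "0 \<le> prb N3 P3 R" for R by (rule prb_nonneg[OF dP3])
  have mf01: "?mf0 + ?mf1 = 1 - w2"
  proof -
    have "prb N3 P3 (\<lambda>w. cf w = 2) = prb N3 P3 (\<lambda>w. An \<union> Rn \<subseteq> w)" unfolding cf_def by (rule prb_cong) auto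
    thus ?thesis using prb_three[where c=cf, OF fN3 dP3 cf3] w2P3 by linarith
  qed
  have mf0: "?mf0 = 1 - w2 - a"
  proof -
    have "prb N3 P3 (\<lambda>w. \<not> An \<union> Rn \<subseteq> w) = prb N3 P3 (\<lambda>w. \<not> An \<union> Rn \<subseteq> w \<and> b1 \<subseteq> w) + prb N3 P3 (\<lambda>w. \<not> An \<union> Rn \<subseteq> w \<and> \<not> b1 \<subseteq> w)"
      by (rule prb_split[OF fN3])
    moreover have "prb N3 P3 (\<lambda>w. \<not> An \<union> Rn \<subseteq> w) = 1 - w2"
      using prb_compl[OF fN3 dP3, of "\<lambda>w. An \<union> Rn \<subseteq> w"] w2P3 by linarith
    moreover have "prb N3 P3 (\<lambda>w. \<not> An \<union> Rn \<subseteq> w \<and> b1 \<subseteq> w) = a" unfolding a_def by (rule prb_cong) auto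
    moreover have "prb N3 P3 (\<lambda>w. \<not> An \<union> Rn \<subseteq> w \<and> \<not> b1 \<subseteq> w) = ?mf0" unfolding cf_def by (rule prb_cong) auto
    ultimately show ?thesis by linarith
  qed
  have zero_f: "\<forall>w. cf (w \<inter> N3) = 2 \<longrightarrow> bn \<subseteq> w \<inter> bn \<longrightarrow> P4 w = 0"
  proof -
    have "prb bn Qbn (\<lambda>w. bn \<subseteq> w) \<le> ?mf0 + ?mf1" using Qbn(2) mf01 w2b condn by linarith
    thus ?thesis by (rule mp[OF P4(7)])
  qed
  have b1N3: "b1 \<subseteq> N3" unfolding N3_def by auto
  have AnRnN3: "An \<union> Rn \<subseteq> N3" using AnRnN2 unfolding N3_def by auto
  define fin where "fin = prb T P4 (\<lambda>w. b1 \<union> bn \<subseteq> w)"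
  have finb: "fin \<le> max 0 (fn - ?mf0)"
  proof -
    have "fin \<le> prb T P4 (\<lambda>w. cf (w \<inter> N3) = 1 \<and> bn \<subseteq> w \<inter> bn) + prb T P4 (\<lambda>w. cf (w \<inter> N3) = 2 \<and> bn \<subseteq> w \<inter> bn)"
      unfolding fin_def by (rule two_class[OF fT dP4]) (use b1N3 in \<open>auto simp: cf_def\<close>)
    also have "\<dots> = fill fn ?mf0 ?mf1 1 + fill fn ?mf0 ?mf1 2" using P4(4) Qbn(2) by simp
    also have "\<dots> = max 0 (fn - ?mf0)" by (rule fill12[OF fnb(1) mfnn mfnn])
    finally show ?thesis .
  qed
  have fe4: "feas T p HG P4"
  proof (rule feas_HI[OF iP4])
    fix i w assume i: "i \<in> {1..n}" and w: "w \<subseteq> T" "e i \<subseteq> w"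
    show "P4 w = 0"
    proof (cases "i = 1")
      case True
      hence ew: "A1 \<subseteq> w" "B1 \<subseteq> w" using w e1_eq by auto
      have "ce ((w \<inter> N3) \<inter> N2) = 2" using ew A1R1N1 unfolding ce_def N3_def N2_def by auto
      moreover have "b1 \<subseteq> (w \<inter> N3) \<inter> b1" using ew b1 b1N3 by auto
      ultimately have "P3 (w \<inter> N3) = 0" using zero_e by blast
      thus ?thesis using P4(5) by blast
    next
      case False
      show ?thesis
      proof (cases "i = n")
        case True
        hence ew: "An \<subseteq> w" "Bn \<subseteq> w" using w en_eq by auto
        have "cf (w \<inter> N3) = 2" using ew AnRnN3 unfolding cf_def by auto
        moreover have "bn \<subseteq> w \<inter> bn" using ew bn by auto
        ultimately show ?thesis using zero_f by blast
      next
        case False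
        hence i2: "i \<in> {2..n-1}" using i \<open>i \<noteq> 1\<close> by auto
        have eM: "e i \<subseteq> Ms" using sub_M[OF i2] unfolding Ms_def .
        have f1': "\<forall>w. w \<subseteq> N1 \<longrightarrow> e i \<subseteq> w \<longrightarrow> P1 w = 0"
          by (rule forb_step[OF P1(5) eM forbM[OF i2]])
        have f2': "\<forall>w. w \<subseteq> N2 \<longrightarrow> e i \<subseteq> w \<longrightarrow> P2 w = 0"
          by (rule forb_step[OF P2(5) _ f1']) (use eM in \<open>auto simp: N1_def\<close>)
        have f3': "\<forall>w. w \<subseteq> N3 \<longrightarrow> e i \<subseteq> w \<longrightarrow> P3 w = 0"
          by (rule forb_step[OF P3(5) _ f2']) (use eM in \<open>auto simp: N1_def N2_def\<close>)
        have f4': "\<forall>w. w \<subseteq> T \<longrightarrow> e i \<subseteq> w \<longrightarrow> P4 w = 0"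
          by (rule forb_step[OF P4(5) _ f3']) (use eM in \<open>auto simp: N1_def N2_def N3_def\<close>)
        thus ?thesis using w by blast
      qed
    qed
  qed
  have "pmin T p HG (b1 \<union> bn) \<le> fin" unfolding fin_def by (rule pmin_le[OF fe4])
  also have "fin \<le> max 0 (f1 + fn - (1 - max 0 (?s + Fr p (R1 \<union> Rn) - 1))) + \<epsilon>"
  proof (rule arith_final[OF w2b _ me0 F3a mf0 finb yM])
    show "z \<le> max 0 (gn - (1 - max 0 (g1 - (1 - y))))" using F2c by simp
    show "g1 + gn - 1 \<le> Fr p (R1 \<union> Rn)" using FRR unfolding g1_def gn_def .
    show "0 \<le> Fr p (R1 \<union> Rn)" using Fr01[of "R1 \<union> Rn"] R1T RnT by auto
    show "gn \<le> 1" by (rule gnb(2))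
    show "max 0 (gn - (1 - v)) \<le> 1 - fn" by (rule condn)
    show "0 < \<epsilon>" by (rule ep)
  qed
  finally show ?thesis unfolding f1_def fn_def .
qed

end


context L begin

lemma main:
  "pmin T p HG (b1 \<union> bn) =
           max 0 (pmin T p {} b1 + pmin T p {} bn
             - (1 - pmin T p (sub e n)
                      (alpha e 1 \<union> (ears e n 1 - b1) \<union> alpha e (n - 1) \<union> (ears e n n - bn))))
       \<and> pmin T p (sub e n)
           (alpha e 1 \<union> (ears e n 1 - b1) \<union> alpha e (n - 1) \<union> (ears e n n - bn)) =
         max 0 (pmin T p (sub e n) (alpha e 1 \<union> alpha e (n - 1))
                + pmin T p {} ((ears e n 1 - b1) \<union> (ears e n n - bn)) - 1)
       \<and> (\<forall>\<gamma>. \<gamma> \<subseteq> T \<longrightarrow>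
           pmin T p {} \<gamma> = max 0 ((\<Sum>t\<in>\<gamma>. p t) - real (card \<gamma>) + 1))"
proof -
  have b1T: "b1 \<subseteq> T" and bnT: "bn \<subseteq> T" and RT: "R1 \<union> Rn \<subseteq> T" using b1 bn B1_T Bn_T by auto
  have pb1: "pmin T p {} b1 = Fr p b1" by (rule claim3[OF b1T])
  have pbn: "pmin T p {} bn = Fr p bn" by (rule claim3[OF bnT])
  have pR: "pmin T p {} (R1 \<union> Rn) = Fr p (R1 \<union> Rn)" by (rule claim3[OF RT])
  have C2: "pmin T p SB (A1 \<union> (B1 - b1) \<union> An \<union> (Bn - bn)) =
      max 0 (pmin T p SB (A1 \<union> An) + pmin T p {} (R1 \<union> Rn) - 1)"
    unfolding X_eq pR by (rule claim2)
  let ?X = "A1 \<union> (B1 - b1) \<union> An \<union> (Bn - bn)"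
  have Xeq': "?X = Xs" by (rule X_eq)
  have C1: "pmin T p HG (b1 \<union> bn) = max 0 (Fr p b1 + Fr p bn - (1 - pmin T p SB ?X))"
  proof (rule antisym)
    have sX: "pmin T p SB ?X = max 0 (pmin T p SB (A1 \<union> An) + Fr p (R1 \<union> Rn) - 1)"
      using C2 pR by simp
    show "pmin T p HG (b1 \<union> bn) \<le> max 0 (Fr p b1 + Fr p bn - (1 - pmin T p SB ?X))"
      unfolding sX by (rule field_le_epsilon) (rule c1_upper)
    show "max 0 (Fr p b1 + Fr p bn - (1 - pmin T p SB ?X)) \<le> pmin T p HG (b1 \<union> bn)"
    proof (rule pmin_ge[OF Pm_feas])
      fix Pr assume fe: "feas T p HG Pr"
      have "Fr p b1 + Fr p bn - (1 - pmin T p SB Xs) \<le> prb T Pr (\<lambda>w. b1 \<union> bn \<subseteq> w)" by (rule c1_lower[OF fe])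
      moreover have "0 \<le> prb T Pr (\<lambda>w. b1 \<union> bn \<subseteq> w)" using fe prb_nonneg unfolding feas_def interp_pd by blast
      ultimately show "max 0 (Fr p b1 + Fr p bn - (1 - pmin T p SB ?X)) \<le> prb T Pr (\<lambda>w. b1 \<union> bn \<subseteq> w)"
        unfolding Xeq' by simp
    qed
  qed
  show ?thesis
  proof (intro conjI)
    show "pmin T p HG (b1 \<union> bn) = max 0 (pmin T p {} b1 + pmin T p {} bn - (1 - pmin T p SB ?X))"
      unfolding pb1 pbn by (rule C1)
    show "pmin T p SB ?X = max 0 (pmin T p SB (A1 \<union> An) + pmin T p {} (R1 \<union> Rn) - 1)" by (rule C2)
    show "\<forall>\<gamma>. \<gamma> \<subseteq> T \<longrightarrow> pmin T p {} \<gamma> = max 0 ((\<Sum>t\<in>\<gamma>. p t) - real (card \<gamma>) + 1)"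
      using claim3 unfolding Fr_def by blast
  qed
qed

end

theorem lemma3:
  fixes T :: "'a set" and p :: "'a \<Rightarrow> real" and viol :: "'a set \<Rightarrow> bool"
    and e :: "nat \<Rightarrow> 'a set" and n :: nat and b1 bn :: "'a set"
  assumes "pdb T p"
    and "denial T viol"
    and "satisfies T p viol"
    and "is_chain (conflict_hg T viol) e n"
    and "n > 1"
    and "b1 \<subseteq> ears e n 1"
    and "bn \<subseteq> ears e n n"
  shows "pmin T p (conflict_hg T viol) (b1 \<union> bn) =
           max 0 (pmin T p {} b1 + pmin T p {} bn
             - (1 - pmin T p (sub e n)
                      (alpha e 1 \<union> (ears e n 1 - b1) \<union> alpha e (n - 1) \<union> (ears e n n - bn))))
       \<and> pmin T p (sub e n)
           (alpha e 1 \<union> (ears e n 1 - b1) \<union> alpha e (n - 1) \<union> (ears e n n - bn)) =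
         max 0 (pmin T p (sub e n) (alpha e 1 \<union> alpha e (n - 1))
                + pmin T p {} ((ears e n 1 - b1) \<union> (ears e n n - bn)) - 1)
       \<and> (\<forall>\<gamma>. \<gamma> \<subseteq> T \<longrightarrow>
           pmin T p {} \<gamma> = max 0 ((\<Sum>t\<in>\<gamma>. p t) - real (card \<gamma>) + 1))"
proof -
  interpret L T p viol e n b1 bn by (rule L.intro) (use assms in auto)
  show ?thesis by (rule main)
qed


end
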